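(* For integers $a\ge b\ge0$, the restriction of $V(a,b)$ to the subalgebra $\mathfrak s\cong\mathfrak{sl}_2(\mathbb C)\times\mathfrak{sl}_2(\mathbb C)$ spanned by $\hat e_1,\hat f_1,\hat h_1,\hat e_2,\hat f_2,\hat h_2$ decomposes as \[V(a,b)\big|_{\mathfrak s}\cong\bigoplus_{(p,q)\in\Phi(a,b)}L(p)\boxtimes L(q),\qquad \Phi(a,b)=\{(a-r-s,\ b-r+s):0\le r\le b,\ 0\le s\le a-b\},\] where $L(p)$ is the irreducible $\mathfrak{sl}_2$-module of dimension $p+1$ (the first factor acted on by $\hat e_1,\hat f_1,\hat h_1$, the second by $\hat e_2,\hat f_2,\hat h_2$). In particular each $L(p)\boxtimes L(q)$, $(p,q)\in\Phi(a,b)$, occurs with multiplicity one, and the trivial module $L(0)\boxtimes L(0)$ occurs if and only if $a=b$.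
   Context: Let $\Omega=\begin{pmatrix}0&I_2\\-I_2&0\end{pmatrix}$, $\mathfrak{sp}_4(\mathbb C)=\{X\in M_4(\mathbb C): X^T\Omega+\Omega X=0\}$, and $E_{ij}$ the $4\times4$ elementary matrices. Set $\hat e_1=E_{13}$, $\hat f_1=E_{31}$, $\hat h_1=E_{11}-E_{33}$, $\hat e_2=E_{24}$, $\hat f_2=E_{42}$, $\hat h_2=E_{22}-E_{44}$; $\hat h_1,\hat h_2$ span a Cartan subalgebra, with dual basis $\epsilon_1,\epsilon_2$. Simple roots are $\epsilon_1-\epsilon_2$ and $2\epsilon_2$. For integers $a\ge b\ge0$, $V(a,b)$ denotes the irreducible finite-dimensional $\mathfrak{sp}_4(\mathbb C)$-module (equivalently $\operatorname{Sp}(4,\mathbb C)$-module) of highest weight $a\epsilon_1+b\epsilon_2$. *)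

theory Defs
  imports "HOL-Analysis.Analysis"
begin

text \<open>4x4 complex matrices are modelled as complex^4^4; the paper's matrix index k in 1..4
  corresponds to the element of type 4 given by idx4 k.\<close>

definition idx4 :: "nat \<Rightarrow> 4" where
  "idx4 k = of_nat (k - 1)"

definition Emat :: "nat \<Rightarrow> nat \<Rightarrow> complex^4^4" where
  "Emat i j = (\<chi> k l. if k = idx4 i \<and> l = idx4 j then 1 else 0)"

definition smul :: "complex \<Rightarrow> complex^'m^'k \<Rightarrow> complex^'m^'k" where
  "smul c X = (\<chi> i j. c * X$i$j)"

definition Omega :: "complex^4^4" where
  "Omega = Emat 1 3 + Emat 2 4 - Emat 3 1 - Emat 4 2"

definition sp4 :: "(complex^4^4) set" where
  "sp4 = {X. transpose X ** Omega + Omega ** X = 0}"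

definition e1 :: "complex^4^4" where "e1 = Emat 1 3"
definition f1 :: "complex^4^4" where "f1 = Emat 3 1"
definition h1 :: "complex^4^4" where "h1 = Emat 1 1 - Emat 3 3"
definition e2 :: "complex^4^4" where "e2 = Emat 2 4"
definition f2 :: "complex^4^4" where "f2 = Emat 4 2"
definition h2 :: "complex^4^4" where "h2 = Emat 2 2 - Emat 4 4"

text \<open>Root vectors for the positive roots eps1-eps2, 2eps2, eps1+eps2, 2eps1.\<close>
definition pos_root_vectors :: "(complex^4^4) set" where
  "pos_root_vectors = {Emat 1 2 - Emat 4 3, Emat 2 4, Emat 1 4 + Emat 2 3, Emat 1 3}"

text \<open>The subalgebra s spanned by e1,f1,h1,e2,f2,h2.\<close>
definition s_alg :: "(complex^4^4) set" where
  "s_alg = {X. \<exists>c1 c2 c3 c4 c5 c6. X = smul c1 e1 + smul c2 f1 + smul c3 h1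
                                     + smul c4 e2 + smul c5 f2 + smul c6 h2}"

text \<open>A finite-dimensional representation of sp4 on complex^'n (Lie algebra homomorphism
  sp4 -> gl_n(C)).\<close>
definition is_sp4_rep :: "(complex^4^4 \<Rightarrow> complex^'n^'n) \<Rightarrow> bool" where
  "is_sp4_rep \<rho> \<longleftrightarrow>
     (\<forall>X\<in>sp4. \<forall>Y\<in>sp4. \<rho> (X + Y) = \<rho> X + \<rho> Y) \<and>
     (\<forall>c. \<forall>X\<in>sp4. \<rho> (smul c X) = smul c (\<rho> X)) \<and>
     (\<forall>X\<in>sp4. \<forall>Y\<in>sp4. \<rho> (X ** Y - Y ** X) = \<rho> X ** \<rho> Y - \<rho> Y ** \<rho> X)"

definition invariant_under :: "(complex^4^4 \<Rightarrow> complex^'n^'n) \<Rightarrow> (complex^4^4) set \<Rightarrow> (complex^'n) set \<Rightarrow> bool" where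
  "invariant_under \<rho> S W \<longleftrightarrow> (\<forall>X\<in>S. \<forall>w\<in>W. \<rho> X *v w \<in> W)"

definition sp4_irreducible :: "(complex^4^4 \<Rightarrow> complex^'n^'n) \<Rightarrow> bool" where
  "sp4_irreducible \<rho> \<longleftrightarrow>
     (\<forall>W. vec.subspace W \<and> invariant_under \<rho> sp4 W \<longrightarrow> W = {0} \<or> W = UNIV)"

text \<open>Existence of a highest weight vector of weight a eps1 + b eps2.\<close>
definition has_highest_weight :: "(complex^4^4 \<Rightarrow> complex^'n^'n) \<Rightarrow> nat \<Rightarrow> nat \<Rightarrow> bool" where
  "has_highest_weight \<rho> a b \<longleftrightarrow>
     (\<exists>v. v \<noteq> 0 \<and> \<rho> h1 *v v = of_nat a *s v \<and> \<rho> h2 *v v = of_nat b *s v \<and>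
          (\<forall>X\<in>pos_root_vectors. \<rho> X *v v = 0))"

text \<open>W is an s-submodule isomorphic to L(p) (x) L(q): it has a basis w(i,j), i<=p, j<=q,
  on which s acts by the standard formulas of the irreducible sl2-modules L(p), L(q)
  (first factor via e1,f1,h1, second via e2,f2,h2).\<close>
definition is_LpLq :: "(complex^4^4 \<Rightarrow> complex^'n^'n) \<Rightarrow> (complex^'n) set \<Rightarrow> nat \<Rightarrow> nat \<Rightarrow> bool" where
  "is_LpLq \<rho> W p q \<longleftrightarrow>
     (\<exists>w :: nat \<times> nat \<Rightarrow> complex^'n.
        inj_on w ({..p} \<times> {..q}) \<and> vec.independent (w ` ({..p} \<times> {..q})) \<and>
        vec.span (w ` ({..p} \<times> {..q})) = W \<and>
        (\<forall>i\<le>p. \<forall>j\<le>q.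
           \<rho> h1 *v w (i,j) = (of_int (int p - 2 * int i)) *s w (i,j) \<and>
           \<rho> f1 *v w (i,j) = (if i < p then w (i+1, j) else 0) \<and>
           \<rho> e1 *v w (i,j) = (if i = 0 then 0 else of_nat (i * (p - i + 1)) *s w (i - 1, j)) \<and>
           \<rho> h2 *v w (i,j) = (of_int (int q - 2 * int j)) *s w (i,j) \<and>
           \<rho> f2 *v w (i,j) = (if j < q then w (i, j+1) else 0) \<and>
           \<rho> e2 *v w (i,j) = (if j = 0 then 0 else of_nat (j * (q - j + 1)) *s w (i, j - 1))))"

definition Idx :: "nat \<Rightarrow> nat \<Rightarrow> (nat \<times> nat) set" where
  "Idx a b = {(r, s). r \<le> b \<and> s \<le> a - b}"

definition phi :: "nat \<Rightarrow> nat \<Rightarrow> nat \<times> nat \<Rightarrow> nat \<times> nat" where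
  "phi a b = (\<lambda>(r, s). (a - r - s, b - r + s))"

definition Phi :: "nat \<Rightarrow> nat \<Rightarrow> (nat \<times> nat) set" where
  "Phi a b = phi a b ` Idx a b"

end

theory Submission
  imports Defs
begin

(* ---- Part1.thy ---- *)


lemma Emat_comp: "Emat i j $ x $ y = (if x = idx4 i \<and> y = idx4 j then 1 else 0)"
  by (simp add: Emat_def)
definition "mA = Emat 1 2 - Emat 4 3"
definition "mB = Emat 2 1 - Emat 3 4"
definition "mC = Emat 1 4 + Emat 2 3"
definition "mD = Emat 4 1 + Emat 3 2"
lemma idx4_simps: "idx4 (Suc 0) = 0" "idx4 1 = 0" "idx4 2 = 1" "idx4 3 = 2" "idx4 4 = 3"
  by (simp_all add: idx4_def)
lemma four0: "(4::4) = 0" by simp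
lemma all4: "(\<forall>i::4. P i) \<longleftrightarrow> P 0 \<and> P 1 \<and> P 2 \<and> P 3"
  by (metis exhaust_4 four0)
lemma sum4: "sum f (UNIV::4 set) = f 0 + f 1 + f 2 + f 3"
  using sum_4[of f] four0 by (simp add: ac_simps)
lemma transpose_add': "transpose (X + Y) = transpose X + transpose Y"
  by (simp add: transpose_def vec_eq_iff)
lemma matrix_add_rdistrib': "((B + C) ** A) = (B ** A) + (C ** A)"
  by (simp add: matrix_matrix_mult_def vec_eq_iff sum.distrib[symmetric] algebra_simps)
lemma transpose_zero': "transpose 0 = 0"
  by (simp add: transpose_def vec_eq_iff)
lemmas mdefs = mA_def mB_def mC_def mD_def e1_def e2_def f1_def f2_def h1_def h2_def
lemmas brsimps = vec_eq_iff all4 matrix_matrix_mult_def sum4 smul_def mdefs Emat_comp idx4_simps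
lemmas spsimps = sp4_def Omega_def transpose_def brsimps

lemma sp4_mA: "mA \<in> sp4" by (simp add: spsimps)
lemma sp4_mB: "mB \<in> sp4" by (simp add: spsimps)
lemma sp4_mC: "mC \<in> sp4" by (simp add: spsimps)
lemma sp4_mD: "mD \<in> sp4" by (simp add: spsimps)
lemma sp4_e1: "e1 \<in> sp4" by (simp add: spsimps)
lemma sp4_e2: "e2 \<in> sp4" by (simp add: spsimps)
lemma sp4_f1: "f1 \<in> sp4" by (simp add: spsimps)
lemma sp4_f2: "f2 \<in> sp4" by (simp add: spsimps)
lemma sp4_h1: "h1 \<in> sp4" by (simp add: spsimps)
lemma sp4_h2: "h2 \<in> sp4" by (simp add: spsimps)
lemma sp4_0: "0 \<in> sp4" by (simp add: sp4_def transpose_zero')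

lemma sp4_add: "X \<in> sp4 \<Longrightarrow> Y \<in> sp4 \<Longrightarrow> X + Y \<in> sp4"
proof -
  assume "X \<in> sp4" "Y \<in> sp4"
  then have "transpose X ** Omega + Omega ** X = 0" "transpose Y ** Omega + Omega ** Y = 0"
    by (simp_all add: sp4_def)
  moreover have "transpose (X+Y) ** Omega + Omega ** (X+Y) =
     (transpose X ** Omega + Omega ** X) + (transpose Y ** Omega + Omega ** Y)"
    by (simp add: transpose_add' matrix_add_ldistrib matrix_add_rdistrib' algebra_simps)
  ultimately show ?thesis by (simp add: sp4_def)
qed

lemma smul_mult_left: "smul c X ** Y = smul c (X ** Y)"
  by (simp add: smul_def matrix_matrix_mult_def vec_eq_iff sum_distrib_left mult.assoc)
lemma smul_mult_right: "X ** smul c Y = smul c (X ** Y)"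
  by (simp add: smul_def matrix_matrix_mult_def vec_eq_iff sum_distrib_left algebra_simps)
lemma transpose_smul: "transpose (smul c X) = smul c (transpose X)"
  by (simp add: smul_def transpose_def vec_eq_iff)
lemma smul_add: "smul c X + smul c Y = smul c (X + Y)"
  by (simp add: smul_def vec_eq_iff algebra_simps)
lemma smul_zero: "smul c 0 = 0"
  by (simp add: smul_def vec_eq_iff)
lemma sp4_smul: "X \<in> sp4 \<Longrightarrow> smul c X \<in> sp4"
  by (simp add: sp4_def transpose_smul smul_mult_left smul_mult_right smul_add smul_zero)

lemma sp4_decomp:
  assumes "X \<in> sp4"
  shows "X = smul (X$0$0) h1 + smul (X$1$1) h2 + smul (X$0$2) e1 + smul (X$1$3) e2
           + smul (X$2$0) f1 + smul (X$3$1) f2 + smul (X$0$1) mA + smul (X$1$0) mB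
           + smul (X$0$3) mC + smul (X$3$0) mD"
proof -
  have Z: "transpose X ** Omega + Omega ** X = 0" using assms by (simp add: sp4_def)
  have ent: "(transpose X ** Omega + Omega ** X)$i$j = 0" for i j using Z by simp
  have O: "Omega = (\<chi> i j. if i = 0 \<and> j = 2 \<or> i = 1 \<and> j = 3 then 1 else if i = 2 \<and> j = 0 \<or> i = 3 \<and> j = 1 then -1 else 0)"
    by (simp add: Omega_def vec_eq_iff all4 Emat_comp idx4_simps)
  have ent2: "(transpose X ** Omega + Omega ** X)$i$j = 
     (\<Sum>k\<in>UNIV. X$k$i * Omega$k$j) + (\<Sum>k\<in>UNIV. Omega$i$k * X$k$j)" for i j
    by (simp add: matrix_matrix_mult_def transpose_def)
  have e1: "X$2$2 = - X$0$0" using ent[of 0 2, unfolded ent2, unfolded O] by (simp add: sum4, (algebra)?)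
  have e2: "X$3$3 = - X$1$1" using ent[of 1 3, unfolded ent2, unfolded O] by (simp add: sum4, (algebra)?)
  have e3: "X$3$2 = - X$0$1" using ent[of 1 2, unfolded ent2, unfolded O] by (simp add: sum4, (algebra)?)
  have e4: "X$2$3 = - X$1$0" using ent[of 0 3, unfolded ent2, unfolded O] by (simp add: sum4, (algebra)?)
  have e5: "X$1$2 = X$0$3" using ent[of 2 3, unfolded ent2, unfolded O] by (simp add: sum4, (algebra)?)
  have e6: "X$2$1 = X$3$0" using ent[of 0 1, unfolded ent2, unfolded O] by (simp add: sum4, (algebra)?)
  show ?thesis
    by (simp add: vec_eq_iff all4 smul_def mdefs Emat_comp idx4_simps e1 e2 e3 e4 e5 e6)
qed


lemma br_f2_f1: "f2 ** f1 - f1 ** f2 = 0"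
  by (simp add: brsimps)
lemma br_mD_f1: "mD ** f1 - f1 ** mD = 0"
  by (simp add: brsimps)
lemma br_mD_f2: "mD ** f2 - f2 ** mD = 0"
  by (simp add: brsimps)
lemma br_mB_f1: "mB ** f1 - f1 ** mB = 0"
  by (simp add: brsimps)
lemma br_mB_f2: "mB ** f2 - f2 ** mB = smul (-1) mD"
  by (simp add: brsimps)
lemma br_mB_mD: "mB ** mD - mD ** mB = smul (-2) f1"
  by (simp add: brsimps)
lemma br_mA_f1: "mA ** f1 - f1 ** mA = smul (-1) mD"
  by (simp add: brsimps)
lemma br_mA_f2: "mA ** f2 - f2 ** mA = 0"
  by (simp add: brsimps)
lemma br_mA_mD: "mA ** mD - mD ** mA = smul (-2) f2"
  by (simp add: brsimps)
lemma br_mA_mB: "mA ** mB - mB ** mA = smul 1 h1 + smul (-1) h2"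
  by (simp add: brsimps)
lemma br_mC_f1: "mC ** f1 - f1 ** mC = smul 1 mB"
  by (simp add: brsimps)
lemma br_mC_f2: "mC ** f2 - f2 ** mC = smul 1 mA"
  by (simp add: brsimps)
lemma br_mC_mD: "mC ** mD - mD ** mC = smul 1 h1 + smul 1 h2"
  by (simp add: brsimps)
lemma br_mC_mB: "mC ** mB - mB ** mC = smul (-2) e2"
  by (simp add: brsimps)
lemma br_mC_mA: "mC ** mA - mA ** mC = smul (-2) e1"
  by (simp add: brsimps)
lemma br_h1_f1: "h1 ** f1 - f1 ** h1 = smul (-2) f1"
  by (simp add: brsimps)
lemma br_h1_f2: "h1 ** f2 - f2 ** h1 = 0"
  by (simp add: brsimps)
lemma br_h1_mD: "h1 ** mD - mD ** h1 = smul (-1) mD"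
  by (simp add: brsimps)
lemma br_h1_mB: "h1 ** mB - mB ** h1 = smul (-1) mB"
  by (simp add: brsimps)
lemma br_h1_mA: "h1 ** mA - mA ** h1 = smul 1 mA"
  by (simp add: brsimps)
lemma br_h1_mC: "h1 ** mC - mC ** h1 = smul 1 mC"
  by (simp add: brsimps)
lemma br_h2_f1: "h2 ** f1 - f1 ** h2 = 0"
  by (simp add: brsimps)
lemma br_h2_f2: "h2 ** f2 - f2 ** h2 = smul (-2) f2"
  by (simp add: brsimps)
lemma br_h2_mD: "h2 ** mD - mD ** h2 = smul (-1) mD"
  by (simp add: brsimps)
lemma br_h2_mB: "h2 ** mB - mB ** h2 = smul 1 mB"
  by (simp add: brsimps)
lemma br_h2_mA: "h2 ** mA - mA ** h2 = smul (-1) mA"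
  by (simp add: brsimps)
lemma br_h2_mC: "h2 ** mC - mC ** h2 = smul 1 mC"
  by (simp add: brsimps)
lemma br_h2_h1: "h2 ** h1 - h1 ** h2 = 0"
  by (simp add: brsimps)
lemma br_e1_f1: "e1 ** f1 - f1 ** e1 = smul 1 h1"
  by (simp add: brsimps)
lemma br_e1_f2: "e1 ** f2 - f2 ** e1 = 0"
  by (simp add: brsimps)
lemma br_e1_mD: "e1 ** mD - mD ** e1 = smul 1 mA"
  by (simp add: brsimps)
lemma br_e1_mB: "e1 ** mB - mB ** e1 = smul (-1) mC"
  by (simp add: brsimps)
lemma br_e1_mA: "e1 ** mA - mA ** e1 = 0"
  by (simp add: brsimps)
lemma br_e1_mC: "e1 ** mC - mC ** e1 = 0"
  by (simp add: brsimps)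
lemma br_e1_h1: "e1 ** h1 - h1 ** e1 = smul (-2) e1"
  by (simp add: brsimps)
lemma br_e1_h2: "e1 ** h2 - h2 ** e1 = 0"
  by (simp add: brsimps)
lemma br_e2_f1: "e2 ** f1 - f1 ** e2 = 0"
  by (simp add: brsimps)
lemma br_e2_f2: "e2 ** f2 - f2 ** e2 = smul 1 h2"
  by (simp add: brsimps)
lemma br_e2_mD: "e2 ** mD - mD ** e2 = smul 1 mB"
  by (simp add: brsimps)
lemma br_e2_mB: "e2 ** mB - mB ** e2 = 0"
  by (simp add: brsimps)
lemma br_e2_mA: "e2 ** mA - mA ** e2 = smul (-1) mC"
  by (simp add: brsimps)
lemma br_e2_mC: "e2 ** mC - mC ** e2 = 0"
  by (simp add: brsimps)
lemma br_e2_h1: "e2 ** h1 - h1 ** e2 = 0"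
  by (simp add: brsimps)
lemma br_e2_h2: "e2 ** h2 - h2 ** e2 = smul (-2) e2"
  by (simp add: brsimps)
lemma br_e2_e1: "e2 ** e1 - e1 ** e2 = 0"
  by (simp add: brsimps)


(* ---- p2/Part2.thy ---- *)


lemma smul_mv: "smul c M *v z = c *s (M *v z)"
  by (simp add: smul_def matrix_vector_mult_def vec_eq_iff sum_distrib_left mult.assoc)

locale sprep =
  fixes \<rho> :: "complex^4^4 \<Rightarrow> complex^'n^'n"
  assumes rep: "is_sp4_rep \<rho>"
begin

lemma rho_add: "X \<in> sp4 \<Longrightarrow> Y \<in> sp4 \<Longrightarrow> \<rho> (X + Y) = \<rho> X + \<rho> Y"
  using rep by (simp add: is_sp4_rep_def)
lemma rho_smul: "X \<in> sp4 \<Longrightarrow> \<rho> (smul c X) = smul c (\<rho> X)"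
  using rep by (simp add: is_sp4_rep_def)
lemma rho_br: "X \<in> sp4 \<Longrightarrow> Y \<in> sp4 \<Longrightarrow> \<rho> (X ** Y - Y ** X) = \<rho> X ** \<rho> Y - \<rho> Y ** \<rho> X"
  using rep by (simp add: is_sp4_rep_def)
lemma rho_0: "\<rho> 0 = 0"
  using rho_add[OF sp4_0 sp4_0] by simp

lemma comm_base: assumes "X \<in> sp4" "Y \<in> sp4"
  shows "\<rho> X *v (\<rho> Y *v z) = \<rho> Y *v (\<rho> X *v z) + \<rho> (X ** Y - Y ** X) *v z"
  by (simp add: rho_br[OF assms] matrix_vector_mul_assoc matrix_vector_mult_diff_rdistrib)

lemma comm0: assumes "X \<in> sp4" "Y \<in> sp4" "X ** Y - Y ** X = 0"
  shows "\<rho> X *v (\<rho> Y *v z) = \<rho> Y *v (\<rho> X *v z)"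
  using comm_base[OF assms(1,2), of z] by (simp add: assms(3) rho_0)
lemma comm1: assumes "X \<in> sp4" "Y \<in> sp4" "X ** Y - Y ** X = smul c G" "G \<in> sp4"
  shows "\<rho> X *v (\<rho> Y *v z) = \<rho> Y *v (\<rho> X *v z) + (c *s (\<rho> G *v z))"
  using comm_base[OF assms(1,2), of z] by (simp add: assms(3) rho_smul[OF assms(4)] smul_mv)
lemma comm2: assumes "X \<in> sp4" "Y \<in> sp4" "X ** Y - Y ** X = smul c G + smul d G'" "G \<in> sp4" "G' \<in> sp4"
  shows "\<rho> X *v (\<rho> Y *v z) = \<rho> Y *v (\<rho> X *v z) + (c *s (\<rho> G *v z) + d *s (\<rho> G' *v z))"
  using comm_base[OF assms(1,2), of z]
  by (simp add: assms(3) rho_add sp4_smul assms(4,5) rho_smul smul_mv matrix_vector_mult_add_rdistrib)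

lemma c_f2_f1: "\<rho> f2 *v (\<rho> f1 *v z) = \<rho> f1 *v (\<rho> f2 *v z)"
  by (rule comm0[OF sp4_f2 sp4_f1 br_f2_f1])
lemma c_mD_f1: "\<rho> mD *v (\<rho> f1 *v z) = \<rho> f1 *v (\<rho> mD *v z)"
  by (rule comm0[OF sp4_mD sp4_f1 br_mD_f1])
lemma c_mD_f2: "\<rho> mD *v (\<rho> f2 *v z) = \<rho> f2 *v (\<rho> mD *v z)"
  by (rule comm0[OF sp4_mD sp4_f2 br_mD_f2])
lemma c_mB_f1: "\<rho> mB *v (\<rho> f1 *v z) = \<rho> f1 *v (\<rho> mB *v z)"
  by (rule comm0[OF sp4_mB sp4_f1 br_mB_f1])
lemma c_mB_f2: "\<rho> mB *v (\<rho> f2 *v z) = \<rho> f2 *v (\<rho> mB *v z) + ((-1) *s (\<rho> mD *v z))"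
  by (rule comm1[OF sp4_mB sp4_f2 br_mB_f2 sp4_mD])
lemma c_mB_mD: "\<rho> mB *v (\<rho> mD *v z) = \<rho> mD *v (\<rho> mB *v z) + ((-2) *s (\<rho> f1 *v z))"
  by (rule comm1[OF sp4_mB sp4_mD br_mB_mD sp4_f1])
lemma c_mA_f1: "\<rho> mA *v (\<rho> f1 *v z) = \<rho> f1 *v (\<rho> mA *v z) + ((-1) *s (\<rho> mD *v z))"
  by (rule comm1[OF sp4_mA sp4_f1 br_mA_f1 sp4_mD])
lemma c_mA_f2: "\<rho> mA *v (\<rho> f2 *v z) = \<rho> f2 *v (\<rho> mA *v z)"
  by (rule comm0[OF sp4_mA sp4_f2 br_mA_f2])
lemma c_mA_mD: "\<rho> mA *v (\<rho> mD *v z) = \<rho> mD *v (\<rho> mA *v z) + ((-2) *s (\<rho> f2 *v z))"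
  by (rule comm1[OF sp4_mA sp4_mD br_mA_mD sp4_f2])
lemma c_mA_mB: "\<rho> mA *v (\<rho> mB *v z) = \<rho> mB *v (\<rho> mA *v z) + (1 *s (\<rho> h1 *v z) + (-1) *s (\<rho> h2 *v z))"
  by (rule comm2[OF sp4_mA sp4_mB br_mA_mB sp4_h1 sp4_h2])
lemma c_mC_f1: "\<rho> mC *v (\<rho> f1 *v z) = \<rho> f1 *v (\<rho> mC *v z) + (1 *s (\<rho> mB *v z))"
  by (rule comm1[OF sp4_mC sp4_f1 br_mC_f1 sp4_mB])
lemma c_mC_f2: "\<rho> mC *v (\<rho> f2 *v z) = \<rho> f2 *v (\<rho> mC *v z) + (1 *s (\<rho> mA *v z))"
  by (rule comm1[OF sp4_mC sp4_f2 br_mC_f2 sp4_mA])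
lemma c_mC_mD: "\<rho> mC *v (\<rho> mD *v z) = \<rho> mD *v (\<rho> mC *v z) + (1 *s (\<rho> h1 *v z) + 1 *s (\<rho> h2 *v z))"
  by (rule comm2[OF sp4_mC sp4_mD br_mC_mD sp4_h1 sp4_h2])
lemma c_mC_mB: "\<rho> mC *v (\<rho> mB *v z) = \<rho> mB *v (\<rho> mC *v z) + ((-2) *s (\<rho> e2 *v z))"
  by (rule comm1[OF sp4_mC sp4_mB br_mC_mB sp4_e2])
lemma c_mC_mA: "\<rho> mC *v (\<rho> mA *v z) = \<rho> mA *v (\<rho> mC *v z) + ((-2) *s (\<rho> e1 *v z))"
  by (rule comm1[OF sp4_mC sp4_mA br_mC_mA sp4_e1])
lemma c_h1_f1: "\<rho> h1 *v (\<rho> f1 *v z) = \<rho> f1 *v (\<rho> h1 *v z) + ((-2) *s (\<rho> f1 *v z))"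
  by (rule comm1[OF sp4_h1 sp4_f1 br_h1_f1 sp4_f1])
lemma c_h1_f2: "\<rho> h1 *v (\<rho> f2 *v z) = \<rho> f2 *v (\<rho> h1 *v z)"
  by (rule comm0[OF sp4_h1 sp4_f2 br_h1_f2])
lemma c_h1_mD: "\<rho> h1 *v (\<rho> mD *v z) = \<rho> mD *v (\<rho> h1 *v z) + ((-1) *s (\<rho> mD *v z))"
  by (rule comm1[OF sp4_h1 sp4_mD br_h1_mD sp4_mD])
lemma c_h1_mB: "\<rho> h1 *v (\<rho> mB *v z) = \<rho> mB *v (\<rho> h1 *v z) + ((-1) *s (\<rho> mB *v z))"
  by (rule comm1[OF sp4_h1 sp4_mB br_h1_mB sp4_mB])
lemma c_h1_mA: "\<rho> h1 *v (\<rho> mA *v z) = \<rho> mA *v (\<rho> h1 *v z) + (1 *s (\<rho> mA *v z))"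
  by (rule comm1[OF sp4_h1 sp4_mA br_h1_mA sp4_mA])
lemma c_h1_mC: "\<rho> h1 *v (\<rho> mC *v z) = \<rho> mC *v (\<rho> h1 *v z) + (1 *s (\<rho> mC *v z))"
  by (rule comm1[OF sp4_h1 sp4_mC br_h1_mC sp4_mC])
lemma c_h2_f1: "\<rho> h2 *v (\<rho> f1 *v z) = \<rho> f1 *v (\<rho> h2 *v z)"
  by (rule comm0[OF sp4_h2 sp4_f1 br_h2_f1])
lemma c_h2_f2: "\<rho> h2 *v (\<rho> f2 *v z) = \<rho> f2 *v (\<rho> h2 *v z) + ((-2) *s (\<rho> f2 *v z))"
  by (rule comm1[OF sp4_h2 sp4_f2 br_h2_f2 sp4_f2])
lemma c_h2_mD: "\<rho> h2 *v (\<rho> mD *v z) = \<rho> mD *v (\<rho> h2 *v z) + ((-1) *s (\<rho> mD *v z))"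
  by (rule comm1[OF sp4_h2 sp4_mD br_h2_mD sp4_mD])
lemma c_h2_mB: "\<rho> h2 *v (\<rho> mB *v z) = \<rho> mB *v (\<rho> h2 *v z) + (1 *s (\<rho> mB *v z))"
  by (rule comm1[OF sp4_h2 sp4_mB br_h2_mB sp4_mB])
lemma c_h2_mA: "\<rho> h2 *v (\<rho> mA *v z) = \<rho> mA *v (\<rho> h2 *v z) + ((-1) *s (\<rho> mA *v z))"
  by (rule comm1[OF sp4_h2 sp4_mA br_h2_mA sp4_mA])
lemma c_h2_mC: "\<rho> h2 *v (\<rho> mC *v z) = \<rho> mC *v (\<rho> h2 *v z) + (1 *s (\<rho> mC *v z))"
  by (rule comm1[OF sp4_h2 sp4_mC br_h2_mC sp4_mC])
lemma c_h2_h1: "\<rho> h2 *v (\<rho> h1 *v z) = \<rho> h1 *v (\<rho> h2 *v z)"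
  by (rule comm0[OF sp4_h2 sp4_h1 br_h2_h1])
lemma c_e1_f1: "\<rho> e1 *v (\<rho> f1 *v z) = \<rho> f1 *v (\<rho> e1 *v z) + (1 *s (\<rho> h1 *v z))"
  by (rule comm1[OF sp4_e1 sp4_f1 br_e1_f1 sp4_h1])
lemma c_e1_f2: "\<rho> e1 *v (\<rho> f2 *v z) = \<rho> f2 *v (\<rho> e1 *v z)"
  by (rule comm0[OF sp4_e1 sp4_f2 br_e1_f2])
lemma c_e1_mD: "\<rho> e1 *v (\<rho> mD *v z) = \<rho> mD *v (\<rho> e1 *v z) + (1 *s (\<rho> mA *v z))"
  by (rule comm1[OF sp4_e1 sp4_mD br_e1_mD sp4_mA])
lemma c_e1_mB: "\<rho> e1 *v (\<rho> mB *v z) = \<rho> mB *v (\<rho> e1 *v z) + ((-1) *s (\<rho> mC *v z))"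
  by (rule comm1[OF sp4_e1 sp4_mB br_e1_mB sp4_mC])
lemma c_e1_mA: "\<rho> e1 *v (\<rho> mA *v z) = \<rho> mA *v (\<rho> e1 *v z)"
  by (rule comm0[OF sp4_e1 sp4_mA br_e1_mA])
lemma c_e1_mC: "\<rho> e1 *v (\<rho> mC *v z) = \<rho> mC *v (\<rho> e1 *v z)"
  by (rule comm0[OF sp4_e1 sp4_mC br_e1_mC])
lemma c_e1_h1: "\<rho> e1 *v (\<rho> h1 *v z) = \<rho> h1 *v (\<rho> e1 *v z) + ((-2) *s (\<rho> e1 *v z))"
  by (rule comm1[OF sp4_e1 sp4_h1 br_e1_h1 sp4_e1])
lemma c_e1_h2: "\<rho> e1 *v (\<rho> h2 *v z) = \<rho> h2 *v (\<rho> e1 *v z)"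
  by (rule comm0[OF sp4_e1 sp4_h2 br_e1_h2])
lemma c_e2_f1: "\<rho> e2 *v (\<rho> f1 *v z) = \<rho> f1 *v (\<rho> e2 *v z)"
  by (rule comm0[OF sp4_e2 sp4_f1 br_e2_f1])
lemma c_e2_f2: "\<rho> e2 *v (\<rho> f2 *v z) = \<rho> f2 *v (\<rho> e2 *v z) + (1 *s (\<rho> h2 *v z))"
  by (rule comm1[OF sp4_e2 sp4_f2 br_e2_f2 sp4_h2])
lemma c_e2_mD: "\<rho> e2 *v (\<rho> mD *v z) = \<rho> mD *v (\<rho> e2 *v z) + (1 *s (\<rho> mB *v z))"
  by (rule comm1[OF sp4_e2 sp4_mD br_e2_mD sp4_mB])
lemma c_e2_mB: "\<rho> e2 *v (\<rho> mB *v z) = \<rho> mB *v (\<rho> e2 *v z)"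
  by (rule comm0[OF sp4_e2 sp4_mB br_e2_mB])
lemma c_e2_mA: "\<rho> e2 *v (\<rho> mA *v z) = \<rho> mA *v (\<rho> e2 *v z) + ((-1) *s (\<rho> mC *v z))"
  by (rule comm1[OF sp4_e2 sp4_mA br_e2_mA sp4_mC])
lemma c_e2_mC: "\<rho> e2 *v (\<rho> mC *v z) = \<rho> mC *v (\<rho> e2 *v z)"
  by (rule comm0[OF sp4_e2 sp4_mC br_e2_mC])
lemma c_e2_h1: "\<rho> e2 *v (\<rho> h1 *v z) = \<rho> h1 *v (\<rho> e2 *v z)"
  by (rule comm0[OF sp4_e2 sp4_h1 br_e2_h1])
lemma c_e2_h2: "\<rho> e2 *v (\<rho> h2 *v z) = \<rho> h2 *v (\<rho> e2 *v z) + ((-2) *s (\<rho> e2 *v z))"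
  by (rule comm1[OF sp4_e2 sp4_h2 br_e2_h2 sp4_e2])
lemma c_e2_e1: "\<rho> e2 *v (\<rho> e1 *v z) = \<rho> e1 *v (\<rho> e2 *v z)"
  by (rule comm0[OF sp4_e2 sp4_e1 br_e2_e1])
lemmas NO = c_f2_f1 c_mD_f1 c_mD_f2 c_mB_f1 c_mB_f2 c_mB_mD c_mA_f1 c_mA_f2 c_mA_mD c_mA_mB c_mC_f1 c_mC_f2 c_mC_mD c_mC_mB c_mC_mA c_h1_f1 c_h1_f2 c_h1_mD c_h1_mB c_h1_mA c_h1_mC c_h2_f1 c_h2_f2 c_h2_mD c_h2_mB c_h2_mA c_h2_mC c_h2_h1 c_e1_f1 c_e1_f2 c_e1_mD c_e1_mB c_e1_mA c_e1_mC c_e1_h1 c_e1_h2 c_e2_f1 c_e2_f2 c_e2_mD c_e2_mB c_e2_mA c_e2_mC c_e2_h1 c_e2_h2 c_e2_e1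

lemmas LIN = matrix_vector_right_distrib matrix_vector_mult_diff_distrib vec.scale matrix_vector_mult_0_right

definition "PP p q w = ((p+1)*(q+1)) *s (\<rho> mD *v w) - (q+1) *s (\<rho> f1 *v (\<rho> mA *v w))
   - (p+1) *s (\<rho> f2 *v (\<rho> mB *v w)) - \<rho> f1 *v (\<rho> f2 *v (\<rho> mC *v w))"

lemma test: assumes "\<rho> e1 *v w = 0" "\<rho> e2 *v w = 0" "\<rho> h1 *v w = p *s w" "\<rho> h2 *v w = q *s w"
  shows "\<rho> e1 *v PP p q w = 0"
  unfolding PP_def
  apply (simp only: LIN NO assms)
  apply (simp add: vec_eq_iff algebra_simps)
  done
end


(* ---- p3/Part3.thy ---- *)

context sprep begin

definition "QB p q w = (p+1) *s (\<rho> mB *v w) + \<rho> f1 *v (\<rho> mC *v w)"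
definition "QA p q w = (q+1) *s (\<rho> mA *v w) + \<rho> f2 *v (\<rho> mC *v w)"
definition "Kw p q w \<longleftrightarrow> \<rho> e1 *v w = 0 \<and> \<rho> e2 *v w = 0 \<and> \<rho> h1 *v w = p *s w \<and> \<rho> h2 *v w = q *s w"
definition "cas z = 2 *s (\<rho> e1 *v (\<rho> f1 *v z)) + 2 *s (\<rho> f1 *v (\<rho> e1 *v z))
   + 2 *s (\<rho> e2 *v (\<rho> f2 *v z)) + 2 *s (\<rho> f2 *v (\<rho> e2 *v z))
   + \<rho> h1 *v (\<rho> h1 *v z) + \<rho> h2 *v (\<rho> h2 *v z)
   + \<rho> mA *v (\<rho> mB *v z) + \<rho> mB *v (\<rho> mA *v z)
   + \<rho> mC *v (\<rho> mD *v z) + \<rho> mD *v (\<rho> mC *v z)"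


lemma K1: assumes "Kw p q w" shows "Kw (p-1) (q-1) (PP p q w)"
proof -
  have h: "\<rho> e1 *v w = 0" "\<rho> e2 *v w = 0" "\<rho> h1 *v w = p *s w" "\<rho> h2 *v w = q *s w"
    using assms by (auto simp: Kw_def)
  show ?thesis unfolding Kw_def PP_def by (intro conjI; (simp only: LIN NO h, (simp add: vec_eq_iff algebra_simps power2_eq_square)?))
qed

lemma K2: assumes "Kw p q w" shows "Kw (p-1) (q+1) (QB p q w)"
proof -
  have h: "\<rho> e1 *v w = 0" "\<rho> e2 *v w = 0" "\<rho> h1 *v w = p *s w" "\<rho> h2 *v w = q *s w"
    using assms by (auto simp: Kw_def)
  show ?thesis unfolding Kw_def QB_def by (intro conjI; (simp only: LIN NO h, (simp add: vec_eq_iff algebra_simps power2_eq_square)?))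
qed

lemma K2': assumes "Kw p q w" shows "Kw (p+1) (q-1) (QA p q w)"
proof -
  have h: "\<rho> e1 *v w = 0" "\<rho> e2 *v w = 0" "\<rho> h1 *v w = p *s w" "\<rho> h2 *v w = q *s w"
    using assms by (auto simp: Kw_def)
  show ?thesis unfolding Kw_def QA_def by (intro conjI; (simp only: LIN NO h, (simp add: vec_eq_iff algebra_simps power2_eq_square)?))
qed

lemma K3: assumes "Kw p q w" shows "Kw (p+1) (q+1) (\<rho> mC *v w)"
proof -
  have h: "\<rho> e1 *v w = 0" "\<rho> e2 *v w = 0" "\<rho> h1 *v w = p *s w" "\<rho> h2 *v w = q *s w"
    using assms by (auto simp: Kw_def)
  show ?thesis unfolding Kw_def by (intro conjI; (simp only: LIN NO h, (simp add: vec_eq_iff algebra_simps power2_eq_square)?))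
qed

lemma K4: assumes "Kw p q w" shows "QB (p-1) (q-1) (PP p q w) = PP (p-1) (q+1) (QB p q w)"
proof -
  have h: "\<rho> e1 *v w = 0" "\<rho> e2 *v w = 0" "\<rho> h1 *v w = p *s w" "\<rho> h2 *v w = q *s w"
    using assms by (auto simp: Kw_def)
  show ?thesis unfolding QB_def PP_def by (simp only: LIN NO h, (simp add: vec_eq_iff algebra_simps power2_eq_square)?)
qed

lemma K5: assumes "Kw p q w" shows "QA (p-1) (q-1) (PP p q w) = PP (p+1) (q-1) (QA p q w)"
proof -
  have h: "\<rho> e1 *v w = 0" "\<rho> e2 *v w = 0" "\<rho> h1 *v w = p *s w" "\<rho> h2 *v w = q *s w"
    using assms by (auto simp: Kw_def)
  show ?thesis unfolding QA_def PP_def by (simp only: LIN NO h, (simp add: vec_eq_iff algebra_simps power2_eq_square)?)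
qed

lemma K6: assumes "Kw p q w" shows "\<rho> mC *v QB p q w = QB (p+1) (q+1) (\<rho> mC *v w)"
proof -
  have h: "\<rho> e1 *v w = 0" "\<rho> e2 *v w = 0" "\<rho> h1 *v w = p *s w" "\<rho> h2 *v w = q *s w"
    using assms by (auto simp: Kw_def)
  show ?thesis unfolding QB_def by (simp only: LIN NO h, (simp add: vec_eq_iff algebra_simps power2_eq_square)?)
qed

lemma K7: assumes "Kw p q w" shows "\<rho> mC *v PP p q w = PP (p+1) (q+1) (\<rho> mC *v w)
   + (p+q+2) *s ((q*(p+1)) *s w - (\<rho> mD *v (\<rho> mC *v w) + \<rho> mB *v (\<rho> mA *v w)))"
proof -
  have h: "\<rho> e1 *v w = 0" "\<rho> e2 *v w = 0" "\<rho> h1 *v w = p *s w" "\<rho> h2 *v w = q *s w"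
    using assms by (auto simp: Kw_def)
  show ?thesis unfolding PP_def by (simp only: LIN NO h, (simp add: vec_eq_iff algebra_simps power2_eq_square)?)
qed

lemma cas_K: assumes "Kw p q w" shows "cas w = (p^2+q^2+4*p+2*q) *s w + 2 *s (\<rho> mD *v (\<rho> mC *v w) + \<rho> mB *v (\<rho> mA *v w))"
proof -
  have h: "\<rho> e1 *v w = 0" "\<rho> e2 *v w = 0" "\<rho> h1 *v w = p *s w" "\<rho> h2 *v w = q *s w"
    using assms by (auto simp: Kw_def)
  show ?thesis unfolding cas_def by (simp only: LIN NO h, (simp add: vec_eq_iff algebra_simps power2_eq_square)?)
qed

end


(* ---- p4/Part4.thy ---- *)

context sprep begin

lemma cas_f1: "cas (\<rho> f1 *v z) = \<rho> f1 *v cas z"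
  unfolding cas_def by (simp only: LIN NO, (simp add: vec_eq_iff algebra_simps)?)
lemma cas_f2: "cas (\<rho> f2 *v z) = \<rho> f2 *v cas z"
  unfolding cas_def by (simp only: LIN NO, (simp add: vec_eq_iff algebra_simps)?)
lemma cas_mD: "cas (\<rho> mD *v z) = \<rho> mD *v cas z"
  unfolding cas_def by (simp only: LIN NO, (simp add: vec_eq_iff algebra_simps)?)
lemma cas_mB: "cas (\<rho> mB *v z) = \<rho> mB *v cas z"
  unfolding cas_def by (simp only: LIN NO, (simp add: vec_eq_iff algebra_simps)?)
lemma cas_mA: "cas (\<rho> mA *v z) = \<rho> mA *v cas z"
  unfolding cas_def by (simp only: LIN NO, (simp add: vec_eq_iff algebra_simps)?)
lemma cas_mC: "cas (\<rho> mC *v z) = \<rho> mC *v cas z"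
  unfolding cas_def by (simp only: LIN NO, (simp add: vec_eq_iff algebra_simps)?)
lemma cas_h1: "cas (\<rho> h1 *v z) = \<rho> h1 *v cas z"
  unfolding cas_def by (simp only: LIN NO, (simp add: vec_eq_iff algebra_simps)?)
lemma cas_h2: "cas (\<rho> h2 *v z) = \<rho> h2 *v cas z"
  unfolding cas_def by (simp only: LIN NO, (simp add: vec_eq_iff algebra_simps)?)
lemma cas_e1: "cas (\<rho> e1 *v z) = \<rho> e1 *v cas z"
  unfolding cas_def by (simp only: LIN NO, (simp add: vec_eq_iff algebra_simps)?)
lemma cas_e2: "cas (\<rho> e2 *v z) = \<rho> e2 *v cas z"
  unfolding cas_def by (simp only: LIN NO, (simp add: vec_eq_iff algebra_simps)?)
end


(* ---- p5/Part5.thy ---- *)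


lemma span_inv:
  fixes M :: "complex^'n^'n"
  assumes "\<forall>x\<in>B. M *v x \<in> vec.span B" "y \<in> vec.span B"
  shows "M *v y \<in> vec.span B"
proof -
  have "vec.subspace {y. M *v y \<in> vec.span B}"
    by (simp add: vec.subspace_def vec.add vec.scale vec.span_add vec.span_scale vec.span_zero)
  moreover have "B \<subseteq> {y. M *v y \<in> vec.span B}" using assms(1) by auto
  ultimately have "vec.span B \<subseteq> {y. M *v y \<in> vec.span B}" by (rule vec.span_minimal[rotated])
  then show ?thesis using assms(2) by auto
qed

definition indep_fam :: "'i set \<Rightarrow> ('i \<Rightarrow> complex^'n) \<Rightarrow> bool" where
  "indep_fam I x \<longleftrightarrow> (\<forall>c. (\<Sum>i\<in>I. c i *s x i) = 0 \<longrightarrow> (\<forall>i\<in>I. c i = 0))"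

lemma indep_famD: "indep_fam I x \<Longrightarrow> (\<Sum>i\<in>I. c i *s x i) = 0 \<Longrightarrow> i \<in> I \<Longrightarrow> c i = 0"
  by (auto simp: indep_fam_def)

lemma indep_fam_inj:
  assumes "finite I" "indep_fam I x" shows "inj_on x I"
proof (rule inj_onI, rule ccontr)
  fix i j assume ij: "i \<in> I" "j \<in> I" "x i = x j" "i \<noteq> j"
  define c where "c k = (if k = i then 1 else if k = j then -1 else (0::complex))" for k
  have "(\<Sum>k\<in>I. c k *s x k) = (\<Sum>k\<in>{i,j}. c k *s x k)"
    by (rule sum.mono_neutral_right) (use assms(1) ij in \<open>auto simp: c_def\<close>)
  also have "\<dots> = x i - x j" using ij(4) by (simp add: c_def)
  also have "\<dots> = 0" using ij(3) by simp
  finally have "c i = 0" by (rule indep_famD[OF assms(2) _ ij(1)])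
  then show False by (simp add: c_def)
qed

lemma indep_fam_indep:
  assumes "finite I" "indep_fam I x" shows "vec.independent (x ` I)"
proof (rule vec.independent_if_scalars_zero)
  show "finite (x ` I)" using assms(1) by simp
  fix f y assume s: "(\<Sum>y\<in>x ` I. f y *s y) = 0" and y: "y \<in> x ` I"
  have "(\<Sum>i\<in>I. f (x i) *s x i) = 0"
    using s by (simp add: sum.reindex[OF indep_fam_inj[OF assms]])
  moreover obtain i where "i \<in> I" "y = x i" using y by auto
  ultimately show "f y = 0" using indep_famD[OF assms(2), of "\<lambda>i. f (x i)" i] by simp
qed

lemma indep_fam_subset:
  assumes "finite I" "indep_fam I x" "J \<subseteq> I" shows "indep_fam J x"
  unfolding indep_fam_def
proof (intro allI impI ballI)
  fix c i assume s: "(\<Sum>i\<in>J. c i *s x i) = 0" and i: "i \<in> J"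
  have "(\<Sum>k\<in>I. (if k \<in> J then c k else 0) *s x k) = (\<Sum>k\<in>J. c k *s x k)"
    by (rule sum.mono_neutral_cong_right) (use assms(1,3) in auto)
  then have "(\<Sum>k\<in>I. (if k \<in> J then c k else 0) *s x k) = 0" using s by simp
  then have "(if i \<in> J then c i else 0) = 0" using i assms(3) by (intro indep_famD[OF assms(2)]) auto
  then show "c i = 0" using i by simp
qed

lemma indep_fam_comp:
  assumes "indep_fam (h ` A) x" "inj_on h A" shows "indep_fam A (x \<circ> h)"
  unfolding indep_fam_def
proof (intro allI impI ballI)
  fix c i assume s: "(\<Sum>i\<in>A. c i *s (x \<circ> h) i) = 0" and i: "i \<in> A"
  let ?d = "\<lambda>k. c (the_inv_into A h k)"
  have "(\<Sum>k\<in>h ` A. ?d k *s x k) = (\<Sum>i\<in>A. ?d (h i) *s x (h i))"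
    by (simp add: sum.reindex[OF assms(2)])
  also have "\<dots> = (\<Sum>i\<in>A. c i *s (x \<circ> h) i)"
    by (rule sum.cong) (auto simp: the_inv_into_f_f[OF assms(2)])
  finally have "(\<Sum>k\<in>h ` A. ?d k *s x k) = 0" using s by simp
  then have "?d (h i) = 0" using i by (intro indep_famD[OF assms(1)]) auto
  then show "c i = 0" by (simp add: the_inv_into_f_f[OF assms(2) i])
qed

lemma indep_fam_single:
  assumes "\<forall>i\<in>I. \<forall>j\<in>I. i = j" "\<forall>i\<in>I. x i \<noteq> 0" shows "indep_fam I x"
  unfolding indep_fam_def
proof (intro allI impI ballI)
  fix c i assume s: "(\<Sum>i\<in>I. c i *s x i) = 0" and i: "i \<in> I"
  have "I = {i}" using assms(1) i by auto
  then have "c i *s x i = 0" using s by simp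
  then show "c i = 0" using assms(2) i by (simp add: vec.scale_eq_0_iff)
qed

text \<open>Eigenvectors with distinct eigenvalues summing to zero.\<close>
lemma eig_sum_zero:
  fixes T :: "complex^'n^'n"
  assumes "finite L" "\<forall>l\<in>L. T *v y l = l *s y l" "(\<Sum>l\<in>L. y l) = 0"
  shows "\<forall>l\<in>L. y l = 0"
  using assms
proof (induction L arbitrary: y rule: finite_induct)
  case empty then show ?case by simp
next
  case (insert l0 L)
  have s: "y l0 + (\<Sum>l\<in>L. y l) = 0" using insert by simp
  have "T *v (\<Sum>l\<in>L. y l) = (\<Sum>l\<in>L. l *s y l)" using insert by (simp add: vec.sum)
  moreover have "T *v (\<Sum>l\<in>L. y l) = l0 *s (\<Sum>l\<in>L. y l)"
  proof -
    have "(\<Sum>l\<in>L. y l) = - y l0" using s by (simp add: eq_neg_iff_add_eq_0 add.commute)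
    then show ?thesis using insert by (simp add: vec.neg vector_smult_rneg)
  qed
  ultimately have "(\<Sum>l\<in>L. (l - l0) *s y l) = 0"
    by (simp add: vector_sadd_rdistrib vector_sub_rdistrib sum_subtractf vec.scale_sum_right[symmetric])
  moreover have "\<forall>l\<in>L. T *v ((l - l0) *s y l) = l *s ((l - l0) *s y l)"
  proof
    fix l assume "l \<in> L" then have "T *v y l = l *s y l" using insert.prems by auto
    then show "T *v ((l - l0) *s y l) = l *s ((l - l0) *s y l)" by (simp add: vec.scale vec_eq_iff algebra_simps)
  qed
  ultimately have "\<forall>l\<in>L. (l - l0) *s y l = 0" using insert.IH[of "\<lambda>l. (l - l0) *s y l"] by simp
  then have "\<forall>l\<in>L. y l = 0" using insert(2) by (auto simp: vec.scale_eq_0_iff)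
  then show ?case using s by simp
qed

lemma eig_refine:
  fixes T :: "complex^'n^'n"
  assumes fin: "finite I" and eig: "\<forall>i\<in>I. T *v x i = \<mu> i *s x i"
    and cls: "\<And>l. indep_fam {i\<in>I. \<mu> i = l} x"
  shows "indep_fam I x"
  unfolding indep_fam_def
proof (intro allI impI ballI)
  fix c i assume s: "(\<Sum>i\<in>I. c i *s x i) = 0" and i: "i \<in> I"
  define y where "y l = (\<Sum>k\<in>{k\<in>I. \<mu> k = l}. c k *s x k)" for l
  have "(\<Sum>l\<in>\<mu> ` I. y l) = (\<Sum>k\<in>I. c k *s x k)"
    unfolding y_def by (rule sum.group) (use fin in auto)
  then have s2: "(\<Sum>l\<in>\<mu> ` I. y l) = 0" using s by simp
  have ey: "\<forall>l\<in>\<mu> ` I. T *v y l = l *s y l"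
  proof
    fix l assume "l \<in> \<mu> ` I"
    have "T *v y l = (\<Sum>k\<in>{k\<in>I. \<mu> k = l}. c k *s (T *v x k))" by (simp add: y_def vec.sum vec.scale)
    also have "\<dots> = (\<Sum>k\<in>{k\<in>I. \<mu> k = l}. l *s (c k *s x k))"
      by (rule sum.cong) (use eig in \<open>auto simp: vector_smult_assoc mult.commute\<close>)
    also have "\<dots> = l *s y l" by (simp add: y_def vec.scale_sum_right)
    finally show "T *v y l = l *s y l" .
  qed
  have "y (\<mu> i) = 0" using eig_sum_zero[OF _ ey s2] fin i by auto
  then show "c i = 0" using cls[of "\<mu> i"] i unfolding y_def indep_fam_def by auto
qed

text \<open>sl2 theory.\<close>
lemma sl2_basic:
  fixes E F H :: "complex^'n^'n"
  assumes EF: "\<And>z. E *v (F *v z) = F *v (E *v z) + H *v z"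
      and HF: "\<And>z. H *v (F *v z) = F *v (H *v z) + (-2) *s (F *v z)"
      and u: "E *v u = 0" "H *v u = c *s u"
  shows "H *v (((*v) F ^^ i) u) = (c - 2 * of_nat i) *s (((*v) F ^^ i) u)"
    and "E *v (((*v) F ^^ Suc i) u) = (of_nat (Suc i) * (c - of_nat i)) *s (((*v) F ^^ i) u)"
proof -
  show H: "H *v (((*v) F ^^ i) u) = (c - 2 * of_nat i) *s (((*v) F ^^ i) u)" for i
  proof (induction i)
    case 0 then show ?case by (simp add: u)
  next
    case (Suc i)
    show ?case using HF[of "((*v) F ^^ i) u"] Suc.IH by (simp add: vec.scale vec_eq_iff algebra_simps)
  qed
  show "E *v (((*v) F ^^ Suc i) u) = (of_nat (Suc i) * (c - of_nat i)) *s (((*v) F ^^ i) u)"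
  proof (induction i)
    case 0 then show ?case by (simp add: EF u)
  next
    case (Suc i)
    have "E *v (((*v) F ^^ Suc (Suc i)) u) = F *v (E *v (((*v) F ^^ Suc i) u)) + H *v (((*v) F ^^ Suc i) u)"
      by (simp add: EF)
    also have "\<dots> = (of_nat (Suc (Suc i)) * (c - of_nat (Suc i))) *s (((*v) F ^^ Suc i) u)"
      unfolding Suc H by (simp add: vec.scale vec_eq_iff algebra_simps)
    finally show ?case .
  qed
qed

lemma dim_card_bound:
  fixes B :: "(complex^'n) set"
  assumes "vec.independent B" shows "card B \<le> CARD('n)"
  using vec.independent_card_le_dim[OF subset_UNIV assms] by (simp add: card_cart_basis)

lemma sl2_hw:
  fixes E F H :: "complex^'n^'n"
  assumes EF: "\<And>z. E *v (F *v z) = F *v (E *v z) + H *v z"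
      and HF: "\<And>z. H *v (F *v z) = F *v (H *v z) + (-2) *s (F *v z)"
      and u: "E *v u = 0" "H *v u = c *s u" "u \<noteq> 0"
  shows "\<exists>m::nat. c = of_nat m \<and> ((*v) F ^^ Suc m) u = 0 \<and> (\<forall>i\<le>m. ((*v) F ^^ i) u \<noteq> 0)"
proof -
  let ?fp = "\<lambda>i. ((*v) F ^^ i) u"
  note B = sl2_basic[OF EF HF u(1,2)]
  have ex: "\<exists>k. ?fp k = 0"
  proof (rule ccontr)
    assume "\<nexists>k. ?fp k = 0"
    then have nz: "\<forall>i\<in>{..CARD('n)}. ?fp i \<noteq> 0" by auto
    have "indep_fam {..CARD('n)} ?fp"
    proof (rule eig_refine[where T=H and \<mu>="\<lambda>i. c - 2 * of_nat i"])
      show "\<forall>i\<in>{..CARD('n)}. H *v ?fp i = (c - 2 * of_nat i) *s ?fp i" using B(1) by auto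
      show "indep_fam {i \<in> {..CARD('n)}. c - 2 * of_nat i = l} ?fp" for l
        by (rule indep_fam_single) (use nz in auto)
    qed simp
    then have "vec.independent (?fp ` {..CARD('n)})" "inj_on ?fp {..CARD('n)}"
      using indep_fam_indep indep_fam_inj by auto
    then have "card (?fp ` {..CARD('n)}) \<le> CARD('n)" "card (?fp ` {..CARD('n)}) = Suc CARD('n)"
      using dim_card_bound[of "?fp ` {..CARD('n)}"] by (auto simp: card_image)
    then show False by simp
  qed
  define k where "k = (LEAST k. ?fp k = 0)"
  have k0: "?fp k = 0" unfolding k_def using ex by (rule LeastI_ex)
  have kmin: "i < k \<Longrightarrow> ?fp i \<noteq> 0" for i unfolding k_def using not_less_Least by blast
  have "k \<noteq> 0" using k0 u(3) by (cases k) auto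
  then obtain m where km: "k = Suc m" by (cases k) auto
  have "E *v ?fp (Suc m) = (of_nat (Suc m) * (c - of_nat m)) *s ?fp m" by (rule B(2))
  then have "(of_nat (Suc m) * (c - of_nat m)) *s ?fp m = 0" using k0 km by simp
  moreover have "?fp m \<noteq> 0" using kmin km by simp
  moreover have "1 + complex_of_nat m \<noteq> 0" using of_nat_neq_0[of m, where 'a=complex] by simp
  ultimately have "c = of_nat m" by (simp add: vec.scale_eq_0_iff)
  then show ?thesis using k0 km kmin by (intro exI[of _ m]) auto
qed



(* ---- p6/Part6.thy ---- *)


lemma smul_1: "smul 1 X = X" by (simp add: smul_def vec_eq_iff)
lemma smul_0: "smul 0 X = 0" by (simp add: smul_def vec_eq_iff)
lemma half_vec: fixes Y w :: "complex^'n" assumes "2 *s Y = c *s w" shows "Y = (c/2) *s w"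
proof -
  have "Y = (1/2::complex) *s (2 *s Y)" by (simp add: vector_smult_assoc)
  also have "\<dots> = (1/2::complex) *s (c *s w)" using assms by simp
  also have "\<dots> = (c/2) *s w" by (simp add: vector_smult_assoc)
  finally show ?thesis .
qed

context sprep begin

lemma rho_decomp: assumes "X \<in> sp4"
  shows "\<rho> X *v z = X$0$0 *s (\<rho> h1 *v z) + X$1$1 *s (\<rho> h2 *v z) + X$0$2 *s (\<rho> e1 *v z)
    + X$1$3 *s (\<rho> e2 *v z) + X$2$0 *s (\<rho> f1 *v z) + X$3$1 *s (\<rho> f2 *v z)
    + X$0$1 *s (\<rho> mA *v z) + X$1$0 *s (\<rho> mB *v z) + X$0$3 *s (\<rho> mC *v z) + X$3$0 *s (\<rho> mD *v z)"
proof -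
  note eq = arg_cong[OF sp4_decomp[OF assms], of \<rho>]
  show ?thesis unfolding eq
    by (simp add: rho_add rho_smul sp4_add sp4_smul sp4_h1 sp4_h2 sp4_e1 sp4_e2 sp4_f1 sp4_f2
        sp4_mA sp4_mB sp4_mC sp4_mD smul_mv matrix_vector_mult_add_rdistrib)
qed

lemma inv_of_gens:
  assumes W: "vec.subspace W"
    and g: "\<And>G w. G \<in> {h1,h2,e1,e2,f1,f2,mA,mB,mC,mD} \<Longrightarrow> w \<in> W \<Longrightarrow> \<rho> G *v w \<in> W"
  shows "invariant_under \<rho> sp4 W"
  unfolding invariant_under_def
proof (intro ballI)
  fix X w assume X: "X \<in> sp4" and w: "w \<in> W"
  have m: "G \<in> {h1,h2,e1,e2,f1,f2,mA,mB,mC,mD} \<Longrightarrow> c *s (\<rho> G *v w) \<in> W" for G c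
    using g[OF _ w] W by (simp add: vec.subspace_scale)
  show "\<rho> X *v w \<in> W" unfolding rho_decomp[OF X]
    by (intro vec.subspace_add[OF W] m) auto
qed

lemma cas_add: "cas (x + y) = cas x + cas y"
  unfolding cas_def by (simp only: LIN) (simp add: vec_eq_iff algebra_simps)
lemma cas_scale: "cas (c *s x) = c *s cas x"
  unfolding cas_def by (simp only: LIN) (simp add: vec_eq_iff algebra_simps)
lemma cas_zero: "cas 0 = 0"
  unfolding cas_def by (simp only: LIN) simp

lemma cas_rho: assumes "X \<in> sp4" shows "cas (\<rho> X *v z) = \<rho> X *v cas z"
  unfolding rho_decomp[OF assms]
  by (simp add: cas_add cas_scale cas_h1 cas_h2 cas_e1 cas_e2 cas_f1 cas_f2 cas_mA cas_mB cas_mC cas_mD)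

lemma PP_0: "PP p q 0 = 0" unfolding PP_def by simp
lemma QB_0: "QB p q 0 = 0" unfolding QB_def by simp
lemma QA_0: "QA p q 0 = 0" unfolding QA_def by simp
lemma PP_scale: "PP p q (c *s w) = c *s PP p q w"
  unfolding PP_def by (simp only: LIN) (simp add: vec_eq_iff algebra_simps)
lemma QB_scale: "QB p q (c *s w) = c *s QB p q w"
  unfolding QB_def by (simp only: LIN) (simp add: vec_eq_iff algebra_simps)
lemma QA_scale: "QA p q (c *s w) = c *s QA p q w"
  unfolding QA_def by (simp only: LIN) (simp add: vec_eq_iff algebra_simps)

lemma EF1: "\<rho> e1 *v (\<rho> f1 *v z) = \<rho> f1 *v (\<rho> e1 *v z) + \<rho> h1 *v z" using c_e1_f1 by simp
lemma HF1: "\<rho> h1 *v (\<rho> f1 *v z) = \<rho> f1 *v (\<rho> h1 *v z) + (-2) *s (\<rho> f1 *v z)" using c_h1_f1 by simp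
lemma EF2: "\<rho> e2 *v (\<rho> f2 *v z) = \<rho> f2 *v (\<rho> e2 *v z) + \<rho> h2 *v z" using c_e2_f2 by simp
lemma HF2: "\<rho> h2 *v (\<rho> f2 *v z) = \<rho> f2 *v (\<rho> h2 *v z) + (-2) *s (\<rho> f2 *v z)" using c_h2_f2 by simp
lemma EF3: "\<rho> mA *v (\<rho> mB *v z) = \<rho> mB *v (\<rho> mA *v z) + (\<rho> h1 - \<rho> h2) *v z"
  using c_mA_mB[of z] by (simp add: matrix_vector_mult_diff_rdistrib)
lemma HF3: "(\<rho> h1 - \<rho> h2) *v (\<rho> mB *v z) = \<rho> mB *v ((\<rho> h1 - \<rho> h2) *v z) + (-2) *s (\<rho> mB *v z)"
  using c_h1_mB[of z] c_h2_mB[of z]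
  by (simp add: matrix_vector_mult_diff_rdistrib matrix_vector_mult_diff_distrib vec_eq_iff algebra_simps)

end

locale hwrep = sprep \<rho> for \<rho> :: "complex^4^4 \<Rightarrow> complex^'n^'n" +
  fixes a b :: nat and v :: "complex^'n"
  assumes ba: "b \<le> a" and irr: "sp4_irreducible \<rho>" and v0: "v \<noteq> 0"
    and vh1: "\<rho> h1 *v v = of_nat a *s v" and vh2: "\<rho> h2 *v v = of_nat b *s v"
    and vpos: "\<forall>X\<in>pos_root_vectors. \<rho> X *v v = 0"
begin

lemma vA: "\<rho> mA *v v = 0" using vpos by (simp add: pos_root_vectors_def mA_def)
lemma vC: "\<rho> mC *v v = 0" using vpos by (simp add: pos_root_vectors_def mC_def)
lemma ve1: "\<rho> e1 *v v = 0" using vpos by (simp add: pos_root_vectors_def e1_def)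
lemma ve2: "\<rho> e2 *v v = 0" using vpos by (simp add: pos_root_vectors_def e2_def)
lemma Kv: "Kw (of_nat a) (of_nat b) v" using ve1 ve2 vh1 vh2 by (simp add: Kw_def)

definition "om = (of_nat a)^2 + (of_nat b)^2 + 4 * of_nat a + 2 * (of_nat b :: complex)"

lemma cas_scalar: "cas z = om *s z"
proof -
  let ?W = "{z. cas z = om *s z}"
  have sub: "vec.subspace ?W"
    by (simp add: vec.subspace_def cas_add cas_scale cas_zero vector_smult_assoc mult.commute)
  have inv: "invariant_under \<rho> sp4 ?W"
    by (auto simp: invariant_under_def cas_rho vec.scale)
  have "cas v = om *s v"
    using cas_K[OF Kv] by (simp add: vA vC om_def)
  then have "v \<in> ?W" by simp
  then have "?W = UNIV" using irr sub inv v0 unfolding sp4_irreducible_def by blast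
  then show ?thesis by auto
qed

lemma DCBA: assumes "Kw p q w"
  shows "\<rho> mD *v (\<rho> mC *v w) + \<rho> mB *v (\<rho> mA *v w) = ((om - (p^2+q^2+4*p+2*q))/2) *s w"
proof -
  have "om *s w = (p^2+q^2+4*p+2*q) *s w + 2 *s (\<rho> mD *v (\<rho> mC *v w) + \<rho> mB *v (\<rho> mA *v w))"
    using cas_K[OF assms] cas_scalar[of w] by simp
  then have "2 *s (\<rho> mD *v (\<rho> mC *v w) + \<rho> mB *v (\<rho> mA *v w)) = (om - (p^2+q^2+4*p+2*q)) *s w"
    by (simp add: vec_eq_iff algebra_simps)
  then show ?thesis by (rule half_vec)
qed

definition "pw r s = (of_nat a - of_nat r - of_nat s :: complex)"
definition "qw r s = (of_nat b - of_nat r + of_nat s :: complex)"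

primrec u0 :: "nat \<Rightarrow> complex^'n" where
  "u0 0 = v" | "u0 (Suc s) = QB (pw 0 s) (qw 0 s) (u0 s)"
primrec u :: "nat \<Rightarrow> nat \<Rightarrow> complex^'n" where
  "u 0 s = u0 s" | "u (Suc r) s = PP (pw r s) (qw r s) (u r s)"

lemma pw_simps: "pw r (Suc s) = pw r s - 1" "qw r (Suc s) = qw r s + 1"
   "pw (Suc r) s = pw r s - 1" "qw (Suc r) s = qw r s - 1" "pw 0 0 = of_nat a" "qw 0 0 = of_nat b"
  by (simp_all add: pw_def qw_def algebra_simps)

lemma u0K: "Kw (pw 0 s) (qw 0 s) (u0 s)"
  by (induction s) (simp_all add: Kv pw_simps K2)

lemma uK: "Kw (pw r s) (qw r s) (u r s)"
  by (induction r) (simp_all add: u0K pw_simps K1)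

lemma u_QB: "u r (Suc s) = QB (pw r s) (qw r s) (u r s)"
proof (induction r)
  case 0 then show ?case by simp
next
  case (Suc r)
  have "u (Suc r) (Suc s) = PP (pw r s - 1) (qw r s + 1) (QB (pw r s) (qw r s) (u r s))"
    using Suc by (simp add: pw_simps)
  also have "\<dots> = QB (pw r s - 1) (qw r s - 1) (PP (pw r s) (qw r s) (u r s))"
    using K4[OF uK[of r s]] by simp
  finally show ?case by (simp add: pw_simps)
qed

definition "lam R = (of_nat R * (of_nat b + 1 - of_nat R) * (of_nat a + 2 - of_nat R) * (of_nat a + of_nat b + 3 - of_nat R) :: complex)"

lemma lam_rec: "lam (Suc r) = lam r + (pw r s + qw r s + 2) * (qw r s * (pw r s + 1) - (om - ((pw r s)^2 + (qw r s)^2 + 4 * pw r s + 2 * qw r s)) / 2)"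
  unfolding lam_def om_def pw_def qw_def by (simp add: field_simps power2_eq_square)

lemma C_u: "\<rho> mC *v u r s = (if r = 0 then 0 else lam r *s u (r - 1) s)"
proof (induction r)
  case 0
  show ?case
  proof (induction s)
    case 0 then show ?case by (simp add: vC)
  next
    case (Suc s)
    then show ?case using K6[OF u0K[of s]] by (simp add: QB_0)
  qed
next
  case (Suc r)
  let ?p = "pw r s" and ?q = "qw r s" and ?w = "u r s"
  have "\<rho> mC *v u (Suc r) s = PP (?p+1) (?q+1) (\<rho> mC *v ?w)
      + (?p+?q+2) *s ((?q*(?p+1)) *s ?w - (\<rho> mD *v (\<rho> mC *v ?w) + \<rho> mB *v (\<rho> mA *v ?w)))"
    using K7[OF uK[of r s]] by simp
  also have "PP (?p+1) (?q+1) (\<rho> mC *v ?w) = lam r *s ?w"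
    using Suc.IH by (cases r) (simp_all add: PP_0 PP_scale pw_simps lam_def)
  also have "\<rho> mD *v (\<rho> mC *v ?w) + \<rho> mB *v (\<rho> mA *v ?w) = ((om - (?p^2+?q^2+4*?p+2*?q))/2) *s ?w"
    by (rule DCBA[OF uK])
  finally have "\<rho> mC *v u (Suc r) s = (lam r + (?p+?q+2) * (?q*(?p+1) - (om - (?p^2+?q^2+4*?p+2*?q))/2)) *s ?w"
    by (simp add: vec_eq_iff algebra_simps)
  then show ?case by (simp add: lam_rec[of r s])
qed

end


(* ---- p7/Part7.thy ---- *)

context hwrep begin

abbreviation "fB s \<equiv> ((*v) (\<rho> mB) ^^ s) v"

primrec coef :: "nat \<Rightarrow> complex" where
  "coef 0 = 1" | "coef (Suc s) = (of_nat a - of_nat s + 1) * coef s"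

lemma Cu0: "\<rho> mC *v u0 s = 0" using C_u[of 0 s] by simp

lemma u0_fB: "u0 s = coef s *s fB s"
proof (induction s)
  case 0 show ?case by simp
next
  case (Suc s)
  have "u0 (Suc s) = (pw 0 s + 1) *s (\<rho> mB *v u0 s)" by (simp add: QB_def Cu0)
  also have "\<dots> = (pw 0 s + 1) *s (coef s *s fB (Suc s))" by (simp add: Suc.IH vec.scale)
  also have "\<dots> = coef (Suc s) *s fB (Suc s)" by (simp add: vector_smult_assoc pw_def algebra_simps)
  finally show ?case .
qed

lemma Hv3: "(\<rho> h1 - \<rho> h2) *v v = (of_nat a - of_nat b) *s v"
  by (simp add: matrix_vector_mult_diff_rdistrib vh1 vh2 vec_eq_iff algebra_simps)

lemma B_string: "fB (Suc (a - b)) = 0" "\<And>i. i \<le> a - b \<Longrightarrow> fB i \<noteq> 0"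
proof -
  from sl2_hw[OF EF3 HF3 vA Hv3 v0]
  obtain m where m: "of_nat a - of_nat b = (of_nat m :: complex)" "fB (Suc m) = 0" "\<forall>i\<le>m. fB i \<noteq> 0"
    by (elim exE conjE)
  have "of_nat (a - b) = (of_nat m :: complex)" using m(1) ba by (simp add: of_nat_diff)
  then have "m = a - b" by (simp only: of_nat_eq_iff)
  then show "fB (Suc (a - b)) = 0" "\<And>i. i \<le> a - b \<Longrightarrow> fB i \<noteq> 0" using m by auto
qed

lemma coef_nz: "s \<le> a \<Longrightarrow> coef s \<noteq> 0"
proof (induction s)
  case 0 then show ?case by simp
next
  case (Suc s)
  have "of_nat a - of_nat s + 1 = (of_nat (a - s + 1) :: complex)" using Suc.prems by (simp add: of_nat_diff)
  moreover have "(of_nat (a - s + 1) :: complex) \<noteq> 0" by (simp only: of_nat_eq_0_iff)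
  ultimately have "of_nat a - of_nat s + 1 \<noteq> (0::complex)" by (simp add: add.commute)
  then show ?case using Suc by simp
qed

lemma u0_nz: assumes "s \<le> a - b" shows "u 0 s \<noteq> 0"
proof -
  have "coef s \<noteq> 0" using coef_nz assms ba by simp
  moreover have "fB s \<noteq> 0" using B_string(2) assms by blast
  ultimately show ?thesis by (simp add: u0_fB vec.scale_eq_0_iff)
qed

lemma u_zero_s: "u r (Suc (a - b)) = 0"
proof (induction r)
  case 0
  have "u 0 (Suc (a - b)) = coef (Suc (a - b)) *s fB (Suc (a - b))" by (simp only: u.simps u0_fB)
  then show ?case by (simp only: B_string(1) vector_smult_rzero)
next
  case (Suc r) then show ?case by (simp only: u.simps PP_0)
qed

lemma K_nat2: assumes "Kw p q w" "w \<noteq> 0"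
  shows "\<exists>m. q = of_nat m \<and> ((*v) (\<rho> f2) ^^ Suc m) w = 0 \<and> (\<forall>i\<le>m. ((*v) (\<rho> f2) ^^ i) w \<noteq> 0)"
  using assms sl2_hw[OF EF2 HF2, of w q] by (auto simp: Kw_def)

lemma K_nat1: assumes "\<rho> e1 *v w = 0" "\<rho> h1 *v w = p *s w" "w \<noteq> 0"
  shows "\<exists>m. p = of_nat m \<and> ((*v) (\<rho> f1) ^^ Suc m) w = 0 \<and> (\<forall>i\<le>m. ((*v) (\<rho> f1) ^^ i) w \<noteq> 0)"
  using assms sl2_hw[OF EF1 HF1, of w p] by auto

lemma u_zero_r0: "u (Suc b) 0 = 0"
proof (rule ccontr)
  assume nz: "u (Suc b) 0 \<noteq> 0"
  have "qw (Suc b) 0 = -1" by (simp add: qw_def)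
  then obtain m where m: "(-1::complex) = of_nat m" using K_nat2[OF uK nz] by metis
  then have "(1::complex) + of_nat m = 0" by (simp add: m[symmetric])
  moreover have "(1::complex) + of_nat m \<noteq> 0" using of_nat_neq_0[of m, where 'a=complex] by simp
  ultimately show False by simp
qed

lemma u_zero_r: "u (Suc b) s = 0"
proof (induction s)
  case 0 show ?case by (rule u_zero_r0)
next
  case (Suc s) show ?case by (simp only: u_QB Suc.IH QB_0)
qed

lemma lam_nz: "1 \<le> R \<Longrightarrow> R \<le> b \<Longrightarrow> lam R \<noteq> 0"
proof -
  assume R: "1 \<le> R" "R \<le> b"
  have f1: "(of_nat b + 1 - of_nat R :: complex) = of_nat (b + 1 - R)" using R by (simp add: of_nat_diff)
  have f2: "(of_nat a + 2 - of_nat R :: complex) = of_nat (a + 2 - R)" using R ba by (simp add: of_nat_diff)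
  have f3: "(of_nat a + of_nat b + 3 - of_nat R :: complex) = of_nat (a + b + 3 - R)" using R ba by (simp add: of_nat_diff)
  have "lam R = of_nat (R * (b + 1 - R) * (a + 2 - R) * (a + b + 3 - R))"
    unfolding lam_def f1 f2 f3 by simp
  moreover have "R * (b + 1 - R) * (a + 2 - R) * (a + b + 3 - R) \<noteq> 0" using R ba by simp
  ultimately show ?thesis by (metis of_nat_eq_0_iff)
qed

lemma u_nz: "r \<le> b \<Longrightarrow> s \<le> a - b \<Longrightarrow> u r s \<noteq> 0"
proof (induction r)
  case 0 then show ?case using u0_nz by simp
next
  case (Suc r)
  have "\<rho> mC *v u (Suc r) s = lam (Suc r) *s u r s" using C_u[of "Suc r" s] by simp
  moreover have "lam (Suc r) \<noteq> 0" using lam_nz Suc.prems by simp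
  moreover have "u r s \<noteq> 0" using Suc by simp
  ultimately show ?case by (auto simp: vec.scale_eq_0_iff)
qed

lemma QA_u0: "QA (pw r 0) (qw r 0) (u r 0) = 0"
proof (induction r)
  case 0 then show ?case by (simp add: QA_def vA vC)
next
  case (Suc r)
  show ?case using K5[OF uK[of r 0]] Suc by (simp add: pw_simps PP_0)
qed

definition "mu s = (of_nat b + of_nat s + 2) * (of_nat a - of_nat s + 1) * (of_nat s + 1) * (of_nat a - of_nat b - of_nat s :: complex)"

lemma QA_uS: "QA (pw r (Suc s)) (qw r (Suc s)) (u r (Suc s)) = mu s *s u r s"
proof (induction r)
  case 0
  have E: "\<rho> mA *v fB (Suc s) = (of_nat (Suc s) * ((of_nat a - of_nat b) - of_nat s)) *s fB s"
    by (rule sl2_basic(2)[OF EF3 HF3 vA Hv3])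
  have 1: "QA (pw 0 (Suc s)) (qw 0 (Suc s)) (u0 (Suc s)) = (qw 0 (Suc s) + 1) *s (\<rho> mA *v u0 (Suc s))"
    unfolding QA_def Cu0 by simp
  have 2: "\<rho> mA *v u0 (Suc s) = coef (Suc s) *s ((of_nat (Suc s) * ((of_nat a - of_nat b) - of_nat s)) *s fB s)"
    by (simp only: u0_fB vec.scale E)
  show ?case unfolding u.simps 1 2 u0_fB[of s]
    by (simp add: qw_def mu_def vector_smult_assoc vec_eq_iff algebra_simps)
next
  case (Suc r)
  have "QA (pw r (Suc s) - 1) (qw r (Suc s) - 1) (PP (pw r (Suc s)) (qw r (Suc s)) (u r (Suc s)))
     = PP (pw r (Suc s) + 1) (qw r (Suc s) - 1) (QA (pw r (Suc s)) (qw r (Suc s)) (u r (Suc s)))"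
    by (rule K5[OF uK])
  then show ?case using Suc by (simp add: pw_simps PP_scale)
qed

end


(* ---- p8/Part8.thy ---- *)


context sprep begin

abbreviation F1p :: "nat \<Rightarrow> complex^'n \<Rightarrow> complex^'n" where "F1p i \<equiv> (*v) (\<rho> f1) ^^ i"
abbreviation F2p :: "nat \<Rightarrow> complex^'n \<Rightarrow> complex^'n" where "F2p i \<equiv> (*v) (\<rho> f2) ^^ i"

lemma pow_comm:
  fixes M N :: "complex^'n^'n"
  assumes "\<And>z. M *v (N *v z) = N *v (M *v z)"
  shows "M *v (((*v) N ^^ i) z) = ((*v) N ^^ i) (M *v z)"
  by (induction i) (simp_all add: assms)

lemma pow_0: "((*v) (N::complex^'n^'n) ^^ i) 0 = 0"
  by (induction i) simp_all
lemma pow_scale: "((*v) (N::complex^'n^'n) ^^ i) (c *s z) = c *s ((*v) N ^^ i) z"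
  by (induction i) (simp_all add: vec.scale)

lemma f2_F1p: "\<rho> f2 *v F1p i z = F1p i (\<rho> f2 *v z)" by (rule pow_comm) (rule c_f2_f1)
lemma e2_F1p: "\<rho> e2 *v F1p i z = F1p i (\<rho> e2 *v z)" by (rule pow_comm) (rule c_e2_f1)
lemma h2_F1p: "\<rho> h2 *v F1p i z = F1p i (\<rho> h2 *v z)" by (rule pow_comm) (rule c_h2_f1)
lemma e1_F2p: "\<rho> e1 *v F2p i z = F2p i (\<rho> e1 *v z)" by (rule pow_comm) (rule c_e1_f2)
lemma h1_F2p: "\<rho> h1 *v F2p i z = F2p i (\<rho> h1 *v z)" by (rule pow_comm) (rule c_h1_f2)
lemma f1_F2p: "\<rho> f1 *v F2p i z = F2p i (\<rho> f1 *v z)" by (rule pow_comm) (simp add: c_f2_f1)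
lemma F1p_F2p: "F1p i (F2p j z) = F2p j (F1p i z)"
  by (induction i) (simp_all add: f1_F2p)

end

context hwrep begin

definition "pn r s = a - r - s"
definition "qn r s = b - r + s"
definition "J = Sigma (Idx a b) (\<lambda>(r,s). {..pn r s} \<times> {..qn r s})"
definition "G r s i j = F1p i (F2p j (u r s))"
definition "g k = (case k of ((r,s),(i,j)) \<Rightarrow> G r s i j)"
definition "S = vec.span (g ` J)"

lemma Idx_iff: "(r,s) \<in> Idx a b \<longleftrightarrow> r \<le> b \<and> s \<le> a - b" by (simp add: Idx_def)
lemma J_iff: "((r,s),(i,j)) \<in> J \<longleftrightarrow> r \<le> b \<and> s \<le> a - b \<and> i \<le> pn r s \<and> j \<le> qn r s"
  by (simp add: J_def Idx_def)
lemma g_simp: "g ((r,s),(i,j)) = G r s i j" by (simp add: g_def)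
lemma finite_Idx: "finite (Idx a b)"
  by (rule finite_subset[of _ "{..b} \<times> {..a-b}"]) (auto simp: Idx_def)
lemma finite_J: "finite J" unfolding J_def using finite_Idx by auto

lemma pw_nat: "(r,s) \<in> Idx a b \<Longrightarrow> pw r s = of_nat (pn r s) \<and> qw r s = of_nat (qn r s)"
  using ba by (auto simp: Idx_def pw_def qw_def pn_def qn_def of_nat_diff)

lemma G_in_S: "((r,s),(i,j)) \<in> J \<Longrightarrow> G r s i j \<in> S"
  unfolding S_def by (rule vec.span_base) (metis g_simp image_eqI)

lemma u_in_S: "(r,s) \<in> Idx a b \<Longrightarrow> u r s \<in> S"
  using G_in_S[of r s 0 0] by (simp add: J_iff Idx_iff G_def)

text \<open>sl2 data for each (r,s).\<close>
lemma rs_data: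
  assumes rs: "(r,s) \<in> Idx a b"
  shows "u r s \<noteq> 0" "F2p (Suc (qn r s)) (u r s) = 0" "\<And>j. j \<le> qn r s \<Longrightarrow> F2p j (u r s) \<noteq> 0"
    "F1p (Suc (pn r s)) (u r s) = 0"
    "\<And>i j. i \<le> pn r s \<Longrightarrow> j \<le> qn r s \<Longrightarrow> G r s i j \<noteq> 0"
    "\<And>j. \<rho> e1 *v F2p j (u r s) = 0" "\<And>j. \<rho> h1 *v F2p j (u r s) = of_nat (pn r s) *s F2p j (u r s)"
    "\<rho> e2 *v u r s = 0" "\<rho> h2 *v u r s = of_nat (qn r s) *s u r s"
proof -
  have K: "Kw (of_nat (pn r s)) (of_nat (qn r s)) (u r s)" using uK[of r s] pw_nat[OF rs] by simp
  show nz: "u r s \<noteq> 0" using u_nz rs by (auto simp: Idx_def)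
  show e1: "\<rho> e1 *v F2p j (u r s) = 0" for j using K by (simp add: Kw_def e1_F2p pow_0)
  show h1: "\<rho> h1 *v F2p j (u r s) = of_nat (pn r s) *s F2p j (u r s)" for j
    using K by (simp add: Kw_def h1_F2p pow_scale)
  show "\<rho> e2 *v u r s = 0" "\<rho> h2 *v u r s = of_nat (qn r s) *s u r s" using K by (auto simp: Kw_def)
  from K_nat2[OF K nz] obtain m where m: "(of_nat (qn r s) :: complex) = of_nat m"
     "F2p (Suc m) (u r s) = 0" "\<forall>i\<le>m. F2p i (u r s) \<noteq> 0" by (elim exE conjE)
  have "m = qn r s" using m(1) by (simp only: of_nat_eq_iff)
  then show "F2p (Suc (qn r s)) (u r s) = 0" "\<And>j. j \<le> qn r s \<Longrightarrow> F2p j (u r s) \<noteq> 0" using m by auto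
  have nzj: "\<And>j. j \<le> qn r s \<Longrightarrow> F2p j (u r s) \<noteq> 0" using m \<open>m = qn r s\<close> by auto
  have F1: "\<exists>m. of_nat (pn r s) = (of_nat m::complex) \<and> F1p (Suc m) (F2p j (u r s)) = 0 \<and> (\<forall>i\<le>m. F1p i (F2p j (u r s)) \<noteq> 0)"
    if "j \<le> qn r s" for j
    by (rule K_nat1[OF e1 h1 nzj[OF that]])
  have F1': "F1p (Suc (pn r s)) (F2p j (u r s)) = 0 \<and> (\<forall>i\<le>pn r s. F1p i (F2p j (u r s)) \<noteq> 0)"
    if "j \<le> qn r s" for j
  proof -
    from F1[OF that] obtain m where m: "of_nat (pn r s) = (of_nat m::complex)"
      "F1p (Suc m) (F2p j (u r s)) = 0" "\<forall>i\<le>m. F1p i (F2p j (u r s)) \<noteq> 0" by (elim exE conjE)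
    have "m = pn r s" using m(1) by (simp only: of_nat_eq_iff)
    then show ?thesis using m by auto
  qed
  show "F1p (Suc (pn r s)) (u r s) = 0" using F1'[of 0] by simp
  show "\<And>i j. i \<le> pn r s \<Longrightarrow> j \<le> qn r s \<Longrightarrow> G r s i j \<noteq> 0" using F1' by (auto simp: G_def)
qed

end


(* ---- p9/Part9.thy ---- *)

context hwrep begin

lemma act_f1: assumes "(r,s) \<in> Idx a b" "i \<le> pn r s"
  shows "\<rho> f1 *v G r s i j = (if i < pn r s then G r s (Suc i) j else 0)"
proof (cases "i < pn r s")
  case True then show ?thesis by (simp add: G_def)
next
  case False
  then have i: "i = pn r s" using assms(2) by simp
  have "\<rho> f1 *v G r s i j = F1p (Suc (pn r s)) (F2p j (u r s))" using i by (simp add: G_def)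
  also have "\<dots> = F2p j (F1p (Suc (pn r s)) (u r s))" by (rule F1p_F2p)
  also have "\<dots> = 0" by (simp only: rs_data(4)[OF assms(1)] pow_0)
  finally show ?thesis using False by simp
qed

lemma act_f2: assumes "(r,s) \<in> Idx a b" "j \<le> qn r s"
  shows "\<rho> f2 *v G r s i j = (if j < qn r s then G r s i (Suc j) else 0)"
proof -
  have "\<rho> f2 *v G r s i j = F1p i (F2p (Suc j) (u r s))" by (simp add: G_def f2_F1p)
  moreover have "j = qn r s \<Longrightarrow> F2p (Suc j) (u r s) = 0" using rs_data(2)[OF assms(1)] by simp
  ultimately show ?thesis using assms(2) by (auto simp: G_def pow_0)
qed

lemma act_h1: assumes "(r,s) \<in> Idx a b"
  shows "\<rho> h1 *v G r s i j = (of_nat (pn r s) - 2 * of_nat i) *s G r s i j"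
  unfolding G_def by (rule sl2_basic(1)[OF EF1 HF1 rs_data(6,7)[OF assms]])

lemma act_e1: assumes "(r,s) \<in> Idx a b"
  shows "\<rho> e1 *v G r s (Suc i) j = (of_nat (Suc i) * (of_nat (pn r s) - of_nat i)) *s G r s i j"
    "\<rho> e1 *v G r s 0 j = 0"
  unfolding G_def by (rule sl2_basic(2)[OF EF1 HF1 rs_data(6,7)[OF assms]]) (simp add: rs_data(6)[OF assms])

lemma act_h2: assumes "(r,s) \<in> Idx a b"
  shows "\<rho> h2 *v G r s i j = (of_nat (qn r s) - 2 * of_nat j) *s G r s i j"
  unfolding G_def h2_F1p sl2_basic(1)[OF EF2 HF2 rs_data(8,9)[OF assms]] by (rule pow_scale)

lemma act_e2: assumes "(r,s) \<in> Idx a b"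
  shows "\<rho> e2 *v G r s i (Suc j) = (of_nat (Suc j) * (of_nat (qn r s) - of_nat j)) *s G r s i j"
    "\<rho> e2 *v G r s i 0 = 0"
  unfolding G_def e2_F1p sl2_basic(2)[OF EF2 HF2 rs_data(8,9)[OF assms]]
  by (rule pow_scale) (simp add: rs_data(8)[OF assms] pow_0)

lemma S_sub: "vec.subspace S" unfolding S_def by simp

lemma S_inv_s: assumes "X \<in> {f1,f2,h1,h2,e1,e2}" "z \<in> S" shows "\<rho> X *v z \<in> S"
proof -
  have "\<forall>x\<in>g ` J. \<rho> X *v x \<in> S"
  proof
    fix x assume "x \<in> g ` J"
    then obtain r s i j where k: "((r,s),(i,j)) \<in> J" "x = G r s i j"
      by (auto simp: g_def split: prod.splits)
    then have rs: "(r,s) \<in> Idx a b" and ij: "i \<le> pn r s" "j \<le> qn r s" by (auto simp: J_iff Idx_iff)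
    have GS: "i' \<le> pn r s \<Longrightarrow> j' \<le> qn r s \<Longrightarrow> c *s G r s i' j' \<in> S" for i' j' c
      using G_in_S[of r s i' j'] rs ij by (simp add: J_iff Idx_iff S_def vec.span_scale)
    have GS1: "i' \<le> pn r s \<Longrightarrow> j' \<le> qn r s \<Longrightarrow> G r s i' j' \<in> S" for i' j'
      using GS[of i' j' 1] by simp
    have Z: "0 \<in> S" by (simp add: S_def vec.span_zero)
    show "\<rho> X *v x \<in> S"
      using assms(1)
    proof (elim insertE emptyE)
      assume "X = f1" then show ?thesis using k ij act_f1[OF rs ij(1), of j] GS1 Z by auto
    next
      assume "X = f2" then show ?thesis using k ij act_f2[OF rs ij(2), of i] GS1 Z by auto
    next
      assume X: "X = h1" show ?thesis unfolding X k(2) act_h1[OF rs] by (rule GS[OF ij])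
    next
      assume X: "X = h2" show ?thesis unfolding X k(2) act_h2[OF rs] by (rule GS[OF ij])
    next
      assume "X = e1" then show ?thesis using k ij act_e1[OF rs] GS Z by (cases i) auto
    next
      assume "X = e2" then show ?thesis using k ij act_e2[OF rs] GS Z by (cases j) auto
    qed
  qed
  then show ?thesis using span_inv[of "g ` J" "\<rho> X" z] assms(2) by (simp add: S_def)
qed

end


(* ---- p10/Part10.thy ---- *)

context hwrep begin

lemma S_add: "x \<in> S \<Longrightarrow> y \<in> S \<Longrightarrow> x + y \<in> S" unfolding S_def by (rule vec.span_add)
lemma S_diff: "x \<in> S \<Longrightarrow> y \<in> S \<Longrightarrow> x - y \<in> S" unfolding S_def by (rule vec.span_diff)
lemma S_scale: "x \<in> S \<Longrightarrow> c *s x \<in> S" unfolding S_def by (rule vec.span_scale)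
lemma S_zero: "0 \<in> S" unfolding S_def by (rule vec.span_zero)
lemma S_scale_inv: assumes "c \<noteq> 0" "c *s x \<in> S" shows "x \<in> S"
proof -
  have "x = (1/c) *s (c *s x)" using assms(1) by (simp add: vector_smult_assoc)
  then show ?thesis using S_scale[OF assms(2)] by metis
qed

definition "Pm y \<longleftrightarrow> (\<forall>X\<in>{mA,mB,mC,mD}. \<rho> X *v y \<in> S)"

lemma Pm_f1: assumes "Pm y" shows "Pm (\<rho> f1 *v y)"
proof -
  have A: "\<rho> mA *v y \<in> S" and B: "\<rho> mB *v y \<in> S" and C: "\<rho> mC *v y \<in> S" and D: "\<rho> mD *v y \<in> S"
    using assms by (auto simp: Pm_def)
  have f: "z \<in> S \<Longrightarrow> \<rho> f1 *v z \<in> S" for z by (rule S_inv_s) auto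
  show ?thesis unfolding Pm_def
    by (simp add: c_mA_f1 c_mB_f1 c_mC_f1 c_mD_f1 S_add S_diff S_scale f A B C D)
qed

lemma Pm_f2: assumes "Pm y" shows "Pm (\<rho> f2 *v y)"
proof -
  have A: "\<rho> mA *v y \<in> S" and B: "\<rho> mB *v y \<in> S" and C: "\<rho> mC *v y \<in> S" and D: "\<rho> mD *v y \<in> S"
    using assms by (auto simp: Pm_def)
  have f: "z \<in> S \<Longrightarrow> \<rho> f2 *v z \<in> S" for z by (rule S_inv_s) auto
  show ?thesis unfolding Pm_def
    by (simp add: c_mA_f2 c_mB_f2 c_mC_f2 c_mD_f2 S_add S_diff S_scale f A B C D)
qed

lemma Pm_u: assumes rs: "(r,s) \<in> Idx a b" shows "Pm (u r s)"
proof -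
  let ?w = "u r s" and ?p = "pw r s" and ?q = "qw r s"
  have pq: "?p = of_nat (pn r s)" "?q = of_nat (qn r s)" using pw_nat[OF rs] by auto
  have f1S: "z \<in> S \<Longrightarrow> \<rho> f1 *v z \<in> S" for z by (rule S_inv_s) auto
  have f2S: "z \<in> S \<Longrightarrow> \<rho> f2 *v z \<in> S" for z by (rule S_inv_s) auto
  have r_le: "r \<le> b" and s_le: "s \<le> a - b" using rs by (auto simp: Idx_iff)
  have C: "\<rho> mC *v ?w \<in> S"
  proof (cases r)
    case 0 then show ?thesis using C_u[of r s] S_zero by simp
  next
    case (Suc r')
    have "u r' s \<in> S" using u_in_S[of r' s] Suc r_le s_le by (simp add: Idx_iff)
    then show ?thesis using C_u[of r s] Suc by (simp add: S_scale)
  qed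
  have QA: "QA ?p ?q ?w \<in> S"
  proof (cases s)
    case 0 then show ?thesis using QA_u0[of r] S_zero by simp
  next
    case (Suc s')
    have "u r s' \<in> S" using u_in_S[of r s'] Suc r_le s_le by (simp add: Idx_iff)
    then show ?thesis using QA_uS[of r s'] Suc by (simp add: S_scale)
  qed
  have A: "\<rho> mA *v ?w \<in> S"
  proof (rule S_scale_inv)
    show "?q + 1 \<noteq> 0" unfolding pq using of_nat_neq_0[of "qn r s", where 'a=complex] by (simp add: add.commute)
    have "(?q + 1) *s (\<rho> mA *v ?w) = QA ?p ?q ?w - \<rho> f2 *v (\<rho> mC *v ?w)" by (simp add: QA_def)
    then show "(?q + 1) *s (\<rho> mA *v ?w) \<in> S" using QA f2S[OF C] S_diff by simp
  qed
  have QB: "QB ?p ?q ?w \<in> S"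
  proof (cases "s < a - b")
    case True
    then show ?thesis using u_QB[of r s, symmetric] u_in_S[of r "Suc s"] r_le by (simp add: Idx_iff)
  next
    case False
    then have "s = a - b" using s_le by simp
    then show ?thesis using u_QB[of r s, symmetric] u_zero_s[of r] S_zero by simp
  qed
  have B: "\<rho> mB *v ?w \<in> S"
  proof (rule S_scale_inv)
    show "?p + 1 \<noteq> 0" unfolding pq using of_nat_neq_0[of "pn r s", where 'a=complex] by (simp add: add.commute)
    have "(?p + 1) *s (\<rho> mB *v ?w) = QB ?p ?q ?w - \<rho> f1 *v (\<rho> mC *v ?w)" by (simp add: QB_def)
    then show "(?p + 1) *s (\<rho> mB *v ?w) \<in> S" using QB f1S[OF C] S_diff by simp
  qed
  have PP: "PP ?p ?q ?w \<in> S"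
  proof (cases "r < b")
    case True
    then show ?thesis using u_in_S[of "Suc r" s] s_le by (simp add: Idx_iff)
  next
    case False
    then have "r = b" using r_le by simp
    then show ?thesis using u_zero_r[of s] S_zero by simp
  qed
  have D: "\<rho> mD *v ?w \<in> S"
  proof (rule S_scale_inv)
    have "?p + 1 \<noteq> 0" unfolding pq using of_nat_neq_0[of "pn r s", where 'a=complex] by (simp add: add.commute)
    moreover have "?q + 1 \<noteq> 0" unfolding pq using of_nat_neq_0[of "qn r s", where 'a=complex] by (simp add: add.commute)
    ultimately show "(?p + 1) * (?q + 1) \<noteq> 0" by simp
    have "((?p + 1) * (?q + 1)) *s (\<rho> mD *v ?w) = PP ?p ?q ?w + (?q + 1) *s (\<rho> f1 *v (\<rho> mA *v ?w))
       + (?p + 1) *s (\<rho> f2 *v (\<rho> mB *v ?w)) + \<rho> f1 *v (\<rho> f2 *v (\<rho> mC *v ?w))"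
      by (simp add: PP_def)
    then show "((?p + 1) * (?q + 1)) *s (\<rho> mD *v ?w) \<in> S"
      using PP f1S[OF A] f2S[OF B] f1S[OF f2S[OF C]] by (simp add: S_add S_scale)
  qed
  show ?thesis using A B C D by (simp add: Pm_def)
qed

lemma Pm_G: assumes "((r,s),(i,j)) \<in> J" shows "Pm (G r s i j)"
proof -
  have rs: "(r,s) \<in> Idx a b" using assms by (simp add: J_iff Idx_iff)
  have "Pm (F2p j (u r s))" by (induction j) (simp_all add: Pm_u[OF rs] Pm_f2)
  then have "Pm (F1p i (F2p j (u r s)))" by (induction i) (simp_all add: Pm_f1)
  then show ?thesis by (simp add: G_def)
qed

lemma S_inv_m: assumes "X \<in> {mA,mB,mC,mD}" "z \<in> S" shows "\<rho> X *v z \<in> S"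
proof -
  have "\<forall>x\<in>g ` J. \<rho> X *v x \<in> S"
  proof
    fix x assume "x \<in> g ` J"
    then obtain r s i j where k: "((r,s),(i,j)) \<in> J" "x = G r s i j"
      by (auto simp: g_def split: prod.splits)
    then show "\<rho> X *v x \<in> S" using Pm_G[OF k(1)] assms(1) by (auto simp: Pm_def)
  qed
  then show ?thesis using span_inv[of "g ` J" "\<rho> X" z] assms(2) by (simp add: S_def)
qed

lemma S_UNIV: "S = UNIV"
proof -
  have inv: "invariant_under \<rho> sp4 S"
  proof (rule inv_of_gens[OF S_sub])
    fix G w assume "G \<in> {h1,h2,e1,e2,f1,f2,mA,mB,mC,mD}" "w \<in> S"
    then show "\<rho> G *v w \<in> S" using S_inv_s[of G w] S_inv_m[of G w] by auto
  qed
  have "v \<in> S" using u_in_S[of 0 0] by (simp add: Idx_iff)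
  then have "S \<noteq> {0}" using v0 by auto
  then show ?thesis using irr S_sub inv unfolding sp4_irreducible_def by blast
qed

end


(* ---- p11/Part11.thy ---- *)


lemma sq_inj: assumes "(p::nat)*p + 2*p = p'*p' + 2*p'" shows "p = p'"
proof (rule ccontr)
  assume "p \<noteq> p'"
  then consider "p < p'" | "p' < p" by linarith
  then show False
  proof cases
    case 1 then have "p*p \<le> p'*p'" by (simp add: mult_le_mono)
    then show False using 1 assms by linarith
  next
    case 2 then have "p'*p' \<le> p*p" by (simp add: mult_le_mono)
    then show False using 2 assms by linarith
  qed
qed

context hwrep begin

definition "Cs1 = \<rho> e1 ** \<rho> f1 + \<rho> e1 ** \<rho> f1 + \<rho> f1 ** \<rho> e1 + \<rho> f1 ** \<rho> e1 + \<rho> h1 ** \<rho> h1"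
definition "Cs2 = \<rho> e2 ** \<rho> f2 + \<rho> e2 ** \<rho> f2 + \<rho> f2 ** \<rho> e2 + \<rho> f2 ** \<rho> e2 + \<rho> h2 ** \<rho> h2"

lemma Cs1_mv: "Cs1 *v z = \<rho> e1 *v (\<rho> f1 *v z) + \<rho> e1 *v (\<rho> f1 *v z) + \<rho> f1 *v (\<rho> e1 *v z) + \<rho> f1 *v (\<rho> e1 *v z) + \<rho> h1 *v (\<rho> h1 *v z)"
  by (simp only: Cs1_def matrix_vector_mult_add_rdistrib matrix_vector_mul_assoc[symmetric])
lemma Cs2_mv: "Cs2 *v z = \<rho> e2 *v (\<rho> f2 *v z) + \<rho> e2 *v (\<rho> f2 *v z) + \<rho> f2 *v (\<rho> e2 *v z) + \<rho> f2 *v (\<rho> e2 *v z) + \<rho> h2 *v (\<rho> h2 *v z)"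
  by (simp only: Cs2_def matrix_vector_mult_add_rdistrib matrix_vector_mul_assoc[symmetric])

lemma f1_G: "\<rho> f1 *v G r s i j = G r s (Suc i) j" by (simp add: G_def)
lemma f2_G: "\<rho> f2 *v G r s i j = G r s i (Suc j)" by (simp add: G_def f2_F1p)

lemma Cs1_G: assumes rs: "(r,s) \<in> Idx a b"
  shows "Cs1 *v G r s i j = ((of_nat (pn r s))^2 + 2 * of_nat (pn r s)) *s G r s i j"
proof -
  have E: "\<rho> e1 *v (\<rho> f1 *v G r s i j) = (of_nat (Suc i) * (of_nat (pn r s) - of_nat i)) *s G r s i j"
    by (simp only: f1_G act_e1[OF rs])
  have F: "\<rho> f1 *v (\<rho> e1 *v G r s i j) = (of_nat i * (of_nat (pn r s) - of_nat i + 1)) *s G r s i j"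
  proof (cases i)
    case 0 then show ?thesis by (simp add: act_e1[OF rs])
  next
    case (Suc i') then show ?thesis by (simp add: act_e1[OF rs] vec.scale f1_G algebra_simps)
  qed
  show ?thesis unfolding Cs1_mv E F act_h1[OF rs] vec.scale
    by (simp add: vec_eq_iff algebra_simps power2_eq_square)
qed

lemma Cs2_G: assumes rs: "(r,s) \<in> Idx a b"
  shows "Cs2 *v G r s i j = ((of_nat (qn r s))^2 + 2 * of_nat (qn r s)) *s G r s i j"
proof -
  have E: "\<rho> e2 *v (\<rho> f2 *v G r s i j) = (of_nat (Suc j) * (of_nat (qn r s) - of_nat j)) *s G r s i j"
    by (simp only: f2_G act_e2[OF rs])
  have F: "\<rho> f2 *v (\<rho> e2 *v G r s i j) = (of_nat j * (of_nat (qn r s) - of_nat j + 1)) *s G r s i j"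
  proof (cases j)
    case 0 then show ?thesis by (simp add: act_e2[OF rs])
  next
    case (Suc j') then show ?thesis by (simp add: act_e2[OF rs] vec.scale f2_G algebra_simps)
  qed
  show ?thesis unfolding Cs2_mv E F act_h2[OF rs] vec.scale
    by (simp add: vec_eq_iff algebra_simps power2_eq_square)
qed

definition "mu1 k = (case k of ((r,s),(i,j)) \<Rightarrow> (of_nat (pn r s) - 2 * of_nat i :: complex))"
definition "mu2 k = (case k of ((r,s),(i,j)) \<Rightarrow> (of_nat (qn r s) - 2 * of_nat j :: complex))"
definition "mu3 k = (case k of ((r,s),(i,j)) \<Rightarrow> ((of_nat (pn r s))^2 + 2 * of_nat (pn r s) :: complex))"
definition "mu4 k = (case k of ((r,s),(i,j)) \<Rightarrow> ((of_nat (qn r s))^2 + 2 * of_nat (qn r s) :: complex))"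

lemma eigs: assumes "k \<in> J"
  shows "\<rho> h1 *v g k = mu1 k *s g k" "\<rho> h2 *v g k = mu2 k *s g k"
    "Cs1 *v g k = mu3 k *s g k" "Cs2 *v g k = mu4 k *s g k"
proof -
  obtain r s i j where k: "k = ((r,s),(i,j))" by (metis prod.exhaust)
  have rs: "(r,s) \<in> Idx a b" using assms k by (simp add: J_iff Idx_iff)
  show "\<rho> h1 *v g k = mu1 k *s g k" "\<rho> h2 *v g k = mu2 k *s g k"
    "Cs1 *v g k = mu3 k *s g k" "Cs2 *v g k = mu4 k *s g k"
    unfolding k g_simp mu1_def mu2_def mu3_def mu4_def
    by (simp_all only: act_h1[OF rs] act_h2[OF rs] Cs1_G[OF rs] Cs2_G[OF rs] prod.case)
qed

lemma g_nz: "k \<in> J \<Longrightarrow> g k \<noteq> 0"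
proof -
  assume kJ: "k \<in> J"
  obtain r s i j where k: "k = ((r,s),(i,j))" by (metis prod.exhaust)
  show ?thesis using kJ rs_data(5)[of r s i j] by (simp add: k g_simp J_iff Idx_iff)
qed

lemma mu_inj: assumes "k \<in> J" "k' \<in> J" "mu1 k = mu1 k'" "mu2 k = mu2 k'" "mu3 k = mu3 k'" "mu4 k = mu4 k'"
  shows "k = k'"
proof -
  obtain r s i j where k: "k = ((r,s),(i,j))" by (metis prod.exhaust)
  obtain r' s' i' j' where k': "k' = ((r',s'),(i',j'))" by (metis prod.exhaust)
  have m3: "of_nat (pn r s * pn r s + 2 * pn r s) = (of_nat (pn r' s' * pn r' s' + 2 * pn r' s') :: complex)"
    using assms(5) by (simp add: k k' mu3_def power2_eq_square)
  have p: "pn r s = pn r' s'" using m3 by (simp only: of_nat_eq_iff) (rule sq_inj)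
  have m4: "of_nat (qn r s * qn r s + 2 * qn r s) = (of_nat (qn r' s' * qn r' s' + 2 * qn r' s') :: complex)"
    using assms(6) by (simp add: k k' mu4_def power2_eq_square)
  have q: "qn r s = qn r' s'" using m4 by (simp only: of_nat_eq_iff) (rule sq_inj)
  have "(of_nat i :: complex) = of_nat i'" using assms(3) p by (simp add: k k' mu1_def)
  then have i: "i = i'" by (simp only: of_nat_eq_iff)
  have "(of_nat j :: complex) = of_nat j'" using assms(4) q by (simp add: k k' mu2_def)
  then have j: "j = j'" by (simp only: of_nat_eq_iff)
  have "r \<le> b" "s \<le> a - b" "r' \<le> b" "s' \<le> a - b" using assms(1,2) by (auto simp: k k' J_iff)
  then have "r = r' \<and> s = s'" using p q ba by (simp add: pn_def qn_def) linarith
  then show ?thesis using i j by (simp add: k k')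
qed

lemma indep_J: "indep_fam J g"
proof (rule eig_refine[OF finite_J, where T="\<rho> h1" and \<mu>=mu1])
  show "\<forall>k\<in>J. \<rho> h1 *v g k = mu1 k *s g k" using eigs by auto
  fix l1
  let ?I1 = "{k \<in> J. mu1 k = l1}"
  show "indep_fam ?I1 g"
  proof (rule eig_refine[where T="\<rho> h2" and \<mu>=mu2])
    show "finite ?I1" using finite_J by simp
    show "\<forall>k\<in>?I1. \<rho> h2 *v g k = mu2 k *s g k" using eigs by auto
    fix l2
    let ?I2 = "{k \<in> ?I1. mu2 k = l2}"
    show "indep_fam ?I2 g"
    proof (rule eig_refine[where T="Cs1" and \<mu>=mu3])
      show "finite ?I2" using finite_J by simp
      show "\<forall>k\<in>?I2. Cs1 *v g k = mu3 k *s g k" using eigs by auto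
      fix l3
      let ?I3 = "{k \<in> ?I2. mu3 k = l3}"
      show "indep_fam ?I3 g"
      proof (rule eig_refine[where T="Cs2" and \<mu>=mu4])
        show "finite ?I3" using finite_J by simp
        show "\<forall>k\<in>?I3. Cs2 *v g k = mu4 k *s g k" using eigs by auto
        fix l4
        show "indep_fam {k \<in> ?I3. mu4 k = l4} g"
        proof (rule indep_fam_single)
          show "\<forall>i\<in>{k \<in> ?I3. mu4 k = l4}. \<forall>j\<in>{k \<in> ?I3. mu4 k = l4}. i = j"
            using mu_inj by auto
          show "\<forall>i\<in>{k \<in> ?I3. mu4 k = l4}. g i \<noteq> 0" using g_nz by auto
        qed
      qed
    qed
  qed
qed

end


(* ---- p12/Part12.thy ---- *)


lemma smul_lin_mv:
  fixes M :: "complex^'n^'n"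
  shows "smul c M *v z = c *s (M *v z)" by (rule smul_mv)

context sprep begin

lemma salg_rho: assumes "X \<in> s_alg"
  shows "\<exists>c1 c2 c3 c4 c5 c6. \<forall>z. \<rho> X *v z = c1 *s (\<rho> e1 *v z) + c2 *s (\<rho> f1 *v z) + c3 *s (\<rho> h1 *v z)
     + c4 *s (\<rho> e2 *v z) + c5 *s (\<rho> f2 *v z) + c6 *s (\<rho> h2 *v z)"
proof -
  obtain c1 c2 c3 c4 c5 c6 where X: "X = smul c1 e1 + smul c2 f1 + smul c3 h1 + smul c4 e2 + smul c5 f2 + smul c6 h2"
    using assms by (auto simp: s_alg_def)
  have "\<rho> X = smul c1 (\<rho> e1) + smul c2 (\<rho> f1) + smul c3 (\<rho> h1) + smul c4 (\<rho> e2) + smul c5 (\<rho> f2) + smul c6 (\<rho> h2)"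
    unfolding X by (simp add: rho_add rho_smul sp4_add sp4_smul sp4_h1 sp4_h2 sp4_e1 sp4_e2 sp4_f1 sp4_f2)
  then show ?thesis by (intro exI allI) (simp add: smul_mv matrix_vector_mult_add_rdistrib)
qed

lemma gens_in_salg: "e1 \<in> s_alg" "f1 \<in> s_alg" "h1 \<in> s_alg" "e2 \<in> s_alg" "f2 \<in> s_alg" "h2 \<in> s_alg"
  unfolding s_alg_def
  by (rule CollectI, rule exI[of _ 1] exI[of _ 0], (rule exI[of _ 0] exI[of _ 1])+, simp add: smul_0 smul_1)+

end

context hwrep begin

definition "blk r s = {..pn r s} \<times> {..qn r s}"
definition "Wf rs = vec.span ((\<lambda>ij. g (rs, ij)) ` blk (fst rs) (snd rs))"

lemma finite_blk: "finite (blk r s)" by (simp add: blk_def)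

lemma J_Sigma: "J = Sigma (Idx a b) (\<lambda>rs. blk (fst rs) (snd rs))"
  by (auto simp: J_def blk_def)

lemma blk_indep: assumes rs: "(r,s) \<in> Idx a b" shows "indep_fam (blk r s) (\<lambda>ij. g ((r,s), ij))"
proof -
  have "Pair (r,s) ` blk r s \<subseteq> J" using rs by (auto simp: J_Sigma)
  then have "indep_fam (Pair (r,s) ` blk r s) g" by (rule indep_fam_subset[OF finite_J indep_J])
  then have "indep_fam (blk r s) (g \<circ> Pair (r,s))" by (rule indep_fam_comp) (simp add: inj_on_def)
  then show ?thesis by (simp add: o_def)
qed

lemma Wf_inv_s: assumes rs: "(r,s) \<in> Idx a b" and X: "X \<in> {f1,f2,h1,h2,e1,e2}" and z: "z \<in> Wf (r,s)"
  shows "\<rho> X *v z \<in> Wf (r,s)"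
proof -
  let ?B = "(\<lambda>ij. g ((r,s), ij)) ` blk r s"
  have "\<forall>x\<in>?B. \<rho> X *v x \<in> vec.span ?B"
  proof
    fix x assume "x \<in> ?B"
    then obtain i j where ij: "i \<le> pn r s" "j \<le> qn r s" and x: "x = G r s i j"
      by (auto simp: blk_def g_simp)
    have GS: "i' \<le> pn r s \<Longrightarrow> j' \<le> qn r s \<Longrightarrow> c *s G r s i' j' \<in> vec.span ?B" for i' j' c
      by (rule vec.span_scale, rule vec.span_base) (force simp: blk_def g_simp)
    have GS1: "i' \<le> pn r s \<Longrightarrow> j' \<le> qn r s \<Longrightarrow> G r s i' j' \<in> vec.span ?B" for i' j'
      using GS[of i' j' 1] by simp
    have Z: "0 \<in> vec.span ?B" by (rule vec.span_zero)
    show "\<rho> X *v x \<in> vec.span ?B"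
      using X
    proof (elim insertE emptyE)
      assume "X = f1" then show ?thesis using x ij act_f1[OF rs ij(1), of j] GS1 Z by auto
    next
      assume "X = f2" then show ?thesis using x ij act_f2[OF rs ij(2), of i] GS1 Z by auto
    next
      assume X: "X = h1" show ?thesis unfolding X x act_h1[OF rs] by (rule GS[OF ij])
    next
      assume X: "X = h2" show ?thesis unfolding X x act_h2[OF rs] by (rule GS[OF ij])
    next
      assume "X = e1" then show ?thesis using x ij act_e1[OF rs] GS Z by (cases i) auto
    next
      assume "X = e2" then show ?thesis using x ij act_e2[OF rs] GS Z by (cases j) auto
    qed
  qed
  then show ?thesis using span_inv[of ?B "\<rho> X" z] z by (simp add: Wf_def)
qed

lemma Wf_salg: assumes rs: "(r,s) \<in> Idx a b" shows "invariant_under \<rho> s_alg (Wf (r,s))"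
  unfolding invariant_under_def
proof (intro ballI)
  fix X w assume X: "X \<in> s_alg" and w: "w \<in> Wf (r,s)"
  obtain c1 c2 c3 c4 c5 c6 where e: "\<And>z. \<rho> X *v z = c1 *s (\<rho> e1 *v z) + c2 *s (\<rho> f1 *v z) + c3 *s (\<rho> h1 *v z)
     + c4 *s (\<rho> e2 *v z) + c5 *s (\<rho> f2 *v z) + c6 *s (\<rho> h2 *v z)" using salg_rho[OF X] by blast
  have m: "Y \<in> {f1,f2,h1,h2,e1,e2} \<Longrightarrow> c *s (\<rho> Y *v w) \<in> Wf (r,s)" for Y c
    using Wf_inv_s[OF rs _ w] by (simp add: Wf_def vec.span_scale)
  show "\<rho> X *v w \<in> Wf (r,s)" unfolding e Wf_def
    by (intro vec.span_add m[unfolded Wf_def]) auto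
qed

lemma Wf_LpLq: assumes rs: "(r,s) \<in> Idx a b" shows "is_LpLq \<rho> (Wf (r,s)) (pn r s) (qn r s)"
  unfolding is_LpLq_def
proof (intro exI conjI allI impI)
  let ?w = "\<lambda>ij. g ((r,s), ij)"
  have bl: "blk r s = {..pn r s} \<times> {..qn r s}" by (simp add: blk_def)
  show "inj_on ?w ({..pn r s} \<times> {..qn r s})" using indep_fam_inj[OF finite_blk blk_indep[OF rs]] bl by simp
  show "vec.independent (?w ` ({..pn r s} \<times> {..qn r s}))" using indep_fam_indep[OF finite_blk blk_indep[OF rs]] bl by simp
  show "vec.span (?w ` ({..pn r s} \<times> {..qn r s})) = Wf (r,s)" by (simp add: Wf_def bl)
  fix i j assume i: "i \<le> pn r s" and j: "j \<le> qn r s"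
  show "\<rho> h1 *v ?w (i, j) = of_int (int (pn r s) - 2 * int i) *s ?w (i, j)"
    by (simp add: g_simp act_h1[OF rs])
  show "\<rho> h2 *v ?w (i, j) = of_int (int (qn r s) - 2 * int j) *s ?w (i, j)"
    by (simp add: g_simp act_h2[OF rs])
  show "\<rho> f1 *v ?w (i, j) = (if i < pn r s then ?w (i + 1, j) else 0)"
    by (simp add: g_simp act_f1[OF rs i])
  show "\<rho> f2 *v ?w (i, j) = (if j < qn r s then ?w (i, j + 1) else 0)"
    by (simp add: g_simp act_f2[OF rs j])
  show "\<rho> e1 *v ?w (i, j) = (if i = 0 then 0 else of_nat (i * (pn r s - i + 1)) *s ?w (i - 1, j))"
  proof (cases i)
    case 0 then show ?thesis by (simp add: g_simp act_e1[OF rs])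
  next
    case (Suc i')
    have e: "pn r s - Suc i' + 1 = pn r s - i'" using i Suc by simp
    have "of_nat (Suc i' * (pn r s - Suc i' + 1)) = (of_nat (Suc i') * (of_nat (pn r s) - of_nat i') :: complex)"
      unfolding e of_nat_mult using i Suc by (subst of_nat_diff) auto
    then show ?thesis using Suc by (simp add: g_simp act_e1[OF rs] del: of_nat_Suc)
  qed
  show "\<rho> e2 *v ?w (i, j) = (if j = 0 then 0 else of_nat (j * (qn r s - j + 1)) *s ?w (i, j - 1))"
  proof (cases j)
    case 0 then show ?thesis by (simp add: g_simp act_e2[OF rs])
  next
    case (Suc j')
    have e: "qn r s - Suc j' + 1 = qn r s - j'" using j Suc by simp
    have "of_nat (Suc j' * (qn r s - Suc j' + 1)) = (of_nat (Suc j') * (of_nat (qn r s) - of_nat j') :: complex)"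
      unfolding e of_nat_mult using j Suc by (subst of_nat_diff) auto
    then show ?thesis using Suc by (simp add: g_simp act_e2[OF rs] del: of_nat_Suc)
  qed
qed

lemma dim_Wf: assumes rs: "(r,s) \<in> Idx a b" shows "vec.dim (Wf (r,s)) = card (blk r s)"
proof -
  have "vec.dim (Wf (r,s)) = card ((\<lambda>ij. g ((r,s), ij)) ` blk r s)"
    unfolding Wf_def by (simp add: vec.dim_eq_card_independent indep_fam_indep[OF finite_blk blk_indep[OF rs]])
  also have "\<dots> = card (blk r s)" by (rule card_image[OF indep_fam_inj[OF finite_blk blk_indep[OF rs]]])
  finally show ?thesis .
qed

lemma main1: "\<exists>W :: nat \<times> nat \<Rightarrow> (complex^'n) set.
            (\<forall>i\<in>Idx a b. vec.subspace (W i) \<and> invariant_under \<rho> s_alg (W i) \<and>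
                          is_LpLq \<rho> (W i) (fst (phi a b i)) (snd (phi a b i))) \<and>
            vec.span (\<Union>i\<in>Idx a b. W i) = UNIV \<and>
            vec.dim (UNIV :: (complex^'n) set) = (\<Sum>i\<in>Idx a b. vec.dim (W i))"
proof (intro exI[of _ Wf] conjI ballI)
  fix rs assume rs: "rs \<in> Idx a b"
  obtain r s where rs': "rs = (r,s)" by (cases rs)
  show "vec.subspace (Wf rs)" by (simp add: Wf_def)
  show "invariant_under \<rho> s_alg (Wf rs)" using Wf_salg rs rs' by simp
  have "fst (phi a b rs) = pn r s" "snd (phi a b rs) = qn r s" by (simp_all add: rs' phi_def pn_def qn_def)
  then show "is_LpLq \<rho> (Wf rs) (fst (phi a b rs)) (snd (phi a b rs))" using Wf_LpLq rs rs' by simp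
next
  have "g ` J \<subseteq> (\<Union>i\<in>Idx a b. Wf i)"
  proof
    fix x assume "x \<in> g ` J"
    then obtain rs ij where k: "(rs, ij) \<in> J" "x = g (rs, ij)" by auto
    then have "rs \<in> Idx a b" "ij \<in> blk (fst rs) (snd rs)" by (auto simp: J_Sigma)
    then show "x \<in> (\<Union>i\<in>Idx a b. Wf i)" using k unfolding Wf_def by (auto intro: vec.span_base)
  qed
  then have "S \<subseteq> vec.span (\<Union>i\<in>Idx a b. Wf i)" unfolding S_def by (rule vec.span_mono)
  then show "vec.span (\<Union>i\<in>Idx a b. Wf i) = UNIV" using S_UNIV by auto
next
  have ind: "vec.independent (g ` J)" by (rule indep_fam_indep[OF finite_J indep_J])
  have "vec.dim (UNIV :: (complex^'n) set) = vec.dim (vec.span (g ` J))" using S_UNIV by (simp add: S_def)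
  also have "\<dots> = card (g ` J)" by (rule vec.dim_span_eq_card_independent[OF ind])
  also have "\<dots> = card J" by (rule card_image[OF indep_fam_inj[OF finite_J indep_J]])
  also have "\<dots> = (\<Sum>rs\<in>Idx a b. card (blk (fst rs) (snd rs)))"
    unfolding J_Sigma by (rule card_SigmaI) (simp_all add: finite_Idx finite_blk)
  also have "\<dots> = (\<Sum>rs\<in>Idx a b. vec.dim (Wf rs))"
    by (rule sum.cong) (auto simp: dim_Wf)
  finally show "vec.dim (UNIV :: (complex^'n) set) = (\<Sum>i\<in>Idx a b. vec.dim (Wf i))" .
qed

end


(* ---- p13/Part13.thy ---- *)


context hwrep begin

lemma main4: "(\<exists>y :: complex^'n. y \<noteq> 0 \<and> (\<forall>X\<in>s_alg. \<rho> X *v y = 0)) \<longleftrightarrow> a = b"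
proof
  assume "\<exists>y :: complex^'n. y \<noteq> 0 \<and> (\<forall>X\<in>s_alg. \<rho> X *v y = 0)"
  then obtain y :: "complex^'n" where y0: "y \<noteq> 0" and yk: "\<forall>X\<in>s_alg. \<rho> X *v y = 0" by blast
  have k: "\<rho> e1 *v y = 0" "\<rho> f1 *v y = 0" "\<rho> h1 *v y = 0" "\<rho> e2 *v y = 0" "\<rho> f2 *v y = 0" "\<rho> h2 *v y = 0"
    using yk gens_in_salg by auto
  have C1: "Cs1 *v y = 0" and C2: "Cs2 *v y = 0" by (simp_all add: Cs1_mv Cs2_mv k)
  have "y \<in> vec.span (g ` J)" using S_UNIV by (simp add: S_def)
  then obtain c where "y = (\<Sum>x\<in>g ` J. c x *s x)"
    using vec.span_finite[of "g ` J"] finite_J by auto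
  also have "\<dots> = (\<Sum>k\<in>J. c (g k) *s g k)"
    by (simp add: sum.reindex[OF indep_fam_inj[OF finite_J indep_J]])
  finally have ysum: "y = (\<Sum>k\<in>J. c (g k) *s g k)" .
  have "Cs1 *v y = (\<Sum>k\<in>J. (c (g k) * mu3 k) *s g k)"
    unfolding ysum by (simp add: vec.sum vec.scale eigs vector_smult_assoc cong: sum.cong)
  then have "(\<Sum>k\<in>J. (c (g k) * mu3 k) *s g k) = 0" using C1 by simp
  then have z3: "\<forall>k\<in>J. c (g k) * mu3 k = 0" using indep_famD[OF indep_J, of "\<lambda>k. c (g k) * mu3 k"] by blast
  have "Cs2 *v y = (\<Sum>k\<in>J. (c (g k) * mu4 k) *s g k)"
    unfolding ysum by (simp add: vec.sum vec.scale eigs vector_smult_assoc cong: sum.cong)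
  then have "(\<Sum>k\<in>J. (c (g k) * mu4 k) *s g k) = 0" using C2 by simp
  then have z4: "\<forall>k\<in>J. c (g k) * mu4 k = 0" using indep_famD[OF indep_J, of "\<lambda>k. c (g k) * mu4 k"] by blast
  obtain k where kJ: "k \<in> J" and ck: "c (g k) \<noteq> 0"
  proof (rule ccontr)
    assume "\<not> thesis"
    then have "\<forall>k\<in>J. c (g k) = 0" using that by blast
    then have "y = 0" unfolding ysum by simp
    then show False using y0 by simp
  qed
  obtain r s i j where kk: "k = ((r,s),(i,j))" by (metis prod.exhaust)
  have "mu3 k = 0" "mu4 k = 0" using z3 z4 kJ ck by auto
  then have "of_nat (pn r s * pn r s + 2 * pn r s) = (0::complex)"
    "of_nat (qn r s * qn r s + 2 * qn r s) = (0::complex)"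
    by (simp_all add: kk mu3_def mu4_def power2_eq_square)
  then have "pn r s = 0" "qn r s = 0" by (simp_all only: of_nat_eq_0_iff)
  moreover have "r \<le> b" "s \<le> a - b" using kJ kk by (auto simp: J_iff)
  ultimately show "a = b" using ba by (simp add: pn_def qn_def)
next
  assume ab: "a = b"
  have rs: "(b,0) \<in> Idx a b" by (simp add: Idx_iff)
  have p0: "pn b 0 = 0" "qn b 0 = 0" unfolding pn_def qn_def using ab by simp_all
  let ?y = "u b 0"
  have k: "\<rho> e1 *v ?y = 0" "\<rho> f1 *v ?y = 0" "\<rho> h1 *v ?y = 0" "\<rho> e2 *v ?y = 0" "\<rho> f2 *v ?y = 0" "\<rho> h2 *v ?y = 0"
    using rs_data(6)[OF rs, of 0] rs_data(7)[OF rs, of 0] rs_data(4)[OF rs] rs_data(2)[OF rs]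
      rs_data(8,9)[OF rs] p0 by simp_all
  have "\<forall>X\<in>s_alg. \<rho> X *v ?y = 0"
  proof
    fix X assume "X \<in> s_alg"
    from salg_rho[OF this] obtain c1 c2 c3 c4 c5 c6 where
      e: "\<forall>z. \<rho> X *v z = c1 *s (\<rho> e1 *v z) + c2 *s (\<rho> f1 *v z) + c3 *s (\<rho> h1 *v z)
        + c4 *s (\<rho> e2 *v z) + c5 *s (\<rho> f2 *v z) + c6 *s (\<rho> h2 *v z)" by blast
    show "\<rho> X *v ?y = 0" using e k by simp
  qed
  moreover have "?y \<noteq> 0" by (rule rs_data(1)[OF rs])
  ultimately show "\<exists>y :: complex^'n. y \<noteq> 0 \<and> (\<forall>X\<in>s_alg. \<rho> X *v y = 0)" by blast
qed

end

lemma inj_phi: "b \<le> a \<Longrightarrow> inj_on (phi a b) (Idx a b)"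
  unfolding inj_on_def Idx_def phi_def by auto

lemma zero_Phi: "b \<le> a \<Longrightarrow> ((0,0) \<in> Phi a b \<longleftrightarrow> a = b)"
proof
  assume "b \<le> a" "(0,0) \<in> Phi a b"
  then obtain r s where "r \<le> b" "s \<le> a - b" "(0,0) = (a - r - s, b - r + s)"
    by (auto simp: Phi_def Idx_def phi_def)
  then show "a = b" using \<open>b \<le> a\<close> by auto
next
  assume "b \<le> a" "a = b"
  then have "(0,0) = phi a b (b, 0)" "(b,0) \<in> Idx a b" by (auto simp: phi_def Idx_def)
  then show "(0,0) \<in> Phi a b" by (auto simp: Phi_def)
qed

theorem mainTheorem9:
  fixes \<rho> :: "complex^4^4 \<Rightarrow> complex^'n^'n" and a b :: nat
  assumes "b \<le> a"
    and "is_sp4_rep \<rho>" and "sp4_irreducible \<rho>" and "has_highest_weight \<rho> a b"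
  shows "(\<exists>W :: nat \<times> nat \<Rightarrow> (complex^'n) set.
            (\<forall>i\<in>Idx a b. vec.subspace (W i) \<and> invariant_under \<rho> s_alg (W i) \<and>
                          is_LpLq \<rho> (W i) (fst (phi a b i)) (snd (phi a b i))) \<and>
            vec.span (\<Union>i\<in>Idx a b. W i) = UNIV \<and>
            vec.dim (UNIV :: (complex^'n) set) = (\<Sum>i\<in>Idx a b. vec.dim (W i)))
         \<and> inj_on (phi a b) (Idx a b)
         \<and> ((0, 0) \<in> Phi a b \<longleftrightarrow> a = b)
         \<and> ((\<exists>v :: complex^'n. v \<noteq> 0 \<and> (\<forall>X\<in>s_alg. \<rho> X *v v = 0)) \<longleftrightarrow> a = b)"
proof -
  obtain v where v: "v \<noteq> 0" "\<rho> h1 *v v = of_nat a *s v" "\<rho> h2 *v v = of_nat b *s v"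
     "\<forall>X\<in>pos_root_vectors. \<rho> X *v v = 0"
    using assms(4) unfolding has_highest_weight_def by blast
  interpret H: hwrep \<rho> a b v
    by unfold_locales (use assms v in auto)
  show ?thesis using H.main1 H.main4 inj_phi[OF assms(1)] zero_Phi[OF assms(1)] by blast
qed



end
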